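(* Let $P<G$ be finite groups and $U,V$ irreducible $\mathbb{F}G$-modules such that: (i) $\dim\mathrm{End}_P(U)\geq2$ and $\dim\mathrm{End}_P(V)\geq2$; (ii) the module $W:=(1_P){\uparrow}^G$ is either a direct sum $1_G\oplus A$ or a uniserial module with composition factors $1_G,A,1_G$, where $A\not\cong1_G$. Then $U\otimes V$ is reducible.
   Context: $\mathbb{F}$ is an algebraically closed field; $1_X$ denotes the trivial module of a group $X$. *)

theory Defs
  imports "HOL-Algebra.Coset" "HOL-Computational_Algebra.Polynomial" "Jordan_Normal_Form.Matrix"
begin

text \<open>An FG-module of dimension n is given by a matrix representation
  rho : G -> GL_n(F), acting on the column space carrier_vec n.\<close>

definition is_rep :: "('g, 'b) monoid_scheme \<Rightarrow> nat \<Rightarrow> ('g \<Rightarrow> 'f::field mat) \<Rightarrow> bool" where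
  "is_rep G n \<rho> \<longleftrightarrow>
     (\<forall>g\<in>carrier G. \<rho> g \<in> carrier_mat n n) \<and>
     \<rho> \<one>\<^bsub>G\<^esub> = 1\<^sub>m n \<and>
     (\<forall>g\<in>carrier G. \<forall>h\<in>carrier G. \<rho> (g \<otimes>\<^bsub>G\<^esub> h) = \<rho> g * \<rho> h)"

definition is_subspace :: "nat \<Rightarrow> 'f::field vec set \<Rightarrow> bool" where
  "is_subspace n S \<longleftrightarrow> S \<subseteq> carrier_vec n \<and> 0\<^sub>v n \<in> S \<and>
     (\<forall>u\<in>S. \<forall>v\<in>S. u + v \<in> S) \<and> (\<forall>a. \<forall>v\<in>S. a \<cdot>\<^sub>v v \<in> S)"

definition is_submodule :: "'g set \<Rightarrow> nat \<Rightarrow> ('g \<Rightarrow> 'f::field mat) \<Rightarrow> 'f vec set \<Rightarrow> bool" where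
  "is_submodule H n \<rho> S \<longleftrightarrow> is_subspace n S \<and> (\<forall>g\<in>H. \<forall>v\<in>S. \<rho> g *\<^sub>v v \<in> S)"

definition irreducible_rep :: "('g, 'b) monoid_scheme \<Rightarrow> nat \<Rightarrow> ('g \<Rightarrow> 'f::field mat) \<Rightarrow> bool" where
  "irreducible_rep G n \<rho> \<longleftrightarrow> is_rep G n \<rho> \<and> n > 0 \<and>
     (\<forall>S. is_submodule (carrier G) n \<rho> S \<longrightarrow> S = {0\<^sub>v n} \<or> S = carrier_vec n)"

definition End_rep :: "'g set \<Rightarrow> nat \<Rightarrow> ('g \<Rightarrow> 'f::field mat) \<Rightarrow> 'f mat set" where
  "End_rep H n \<rho> = {M \<in> carrier_mat n n. \<forall>h\<in>H. M * \<rho> h = \<rho> h * M}"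

text \<open>dim End_H(U) >= 2: End_H(U) contains two linearly independent elements.\<close>
definition dim_End_ge2 :: "'g set \<Rightarrow> nat \<Rightarrow> ('g \<Rightarrow> 'f::field mat) \<Rightarrow> bool" where
  "dim_End_ge2 H n \<rho> \<longleftrightarrow> (\<exists>M1\<in>End_rep H n \<rho>. \<exists>M2\<in>End_rep H n \<rho>.
     \<forall>a b. a \<cdot>\<^sub>m M1 + b \<cdot>\<^sub>m M2 = 0\<^sub>m n n \<longrightarrow> a = 0 \<and> b = 0)"

text \<open>For submodules S \<subseteq> T of (n, rho), the subquotient T/S is isomorphic to (m, sigma):
  there is a linear G-equivariant map from T onto F^m with kernel S.\<close>
definition subquot_iso ::
  "('g, 'b) monoid_scheme \<Rightarrow> nat \<Rightarrow> ('g \<Rightarrow> 'f::field mat) \<Rightarrow> 'f vec set \<Rightarrow> 'f vec set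
     \<Rightarrow> nat \<Rightarrow> ('g \<Rightarrow> 'f mat) \<Rightarrow> bool" where
  "subquot_iso G n \<rho> S T m \<sigma> \<longleftrightarrow>
     (\<exists>F \<in> carrier_mat m n. (\<lambda>v. F *\<^sub>v v) ` T = carrier_vec m \<and>
        {v\<in>T. F *\<^sub>v v = 0\<^sub>v m} = S \<and>
        (\<forall>g\<in>carrier G. \<forall>v\<in>T. F *\<^sub>v (\<rho> g *\<^sub>v v) = \<sigma> g *\<^sub>v (F *\<^sub>v v)))"

definition rep_iso :: "('g, 'b) monoid_scheme \<Rightarrow> nat \<Rightarrow> ('g \<Rightarrow> 'f::field mat) \<Rightarrow> nat \<Rightarrow> ('g \<Rightarrow> 'f mat) \<Rightarrow> bool" where
  "rep_iso G n \<rho> m \<sigma> \<longleftrightarrow> subquot_iso G n \<rho> {0\<^sub>v n} (carrier_vec n) m \<sigma>"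

definition triv_rep :: "'g \<Rightarrow> 'f::field mat" where
  "triv_rep = (\<lambda>g. 1\<^sub>m 1)"

text \<open>Kronecker product of matrices, giving the tensor product of modules.\<close>
definition kron :: "'f::field mat \<Rightarrow> 'f mat \<Rightarrow> 'f mat" where
  "kron A B = mat (dim_row A * dim_row B) (dim_col A * dim_col B)
     (\<lambda>(i, j). A $$ (i div dim_row B, j div dim_col B) * B $$ (i mod dim_row B, j mod dim_col B))"

definition tensor_rep :: "('g \<Rightarrow> 'f::field mat) \<Rightarrow> ('g \<Rightarrow> 'f mat) \<Rightarrow> 'g \<Rightarrow> 'f mat" where
  "tensor_rep \<rho> \<sigma> = (\<lambda>g. kron (\<rho> g) (\<sigma> g))"

text \<open>The induced module (1_P)\<up>^G, realised as the permutation module on the left cosets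
  gP, with respect to some enumeration of the cosets.\<close>
definition lcosets_of :: "('g, 'b) monoid_scheme \<Rightarrow> 'g set \<Rightarrow> 'g set set" where
  "lcosets_of G P = {x <#\<^bsub>G\<^esub> P | x. x \<in> carrier G}"

definition ind_dim :: "('g, 'b) monoid_scheme \<Rightarrow> 'g set \<Rightarrow> nat" where
  "ind_dim G P = card (lcosets_of G P)"

definition coset_enum :: "('g, 'b) monoid_scheme \<Rightarrow> 'g set \<Rightarrow> nat \<Rightarrow> 'g set" where
  "coset_enum G P = (SOME e. bij_betw e {..<ind_dim G P} (lcosets_of G P))"

definition ind_triv_rep :: "('g, 'b) monoid_scheme \<Rightarrow> 'g set \<Rightarrow> 'g \<Rightarrow> 'f::field mat" where
  "ind_triv_rep G P = (\<lambda>g. mat (ind_dim G P) (ind_dim G P)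
     (\<lambda>(i, j). if g <#\<^bsub>G\<^esub> coset_enum G P j = coset_enum G P i then 1 else 0))"

text \<open>W is isomorphic to 1_G \<oplus> A (internal direct sum of submodules).\<close>
definition is_triv_plus :: "('g, 'b) monoid_scheme \<Rightarrow> nat \<Rightarrow> ('g \<Rightarrow> 'f::field mat) \<Rightarrow> nat \<Rightarrow> ('g \<Rightarrow> 'f mat) \<Rightarrow> bool" where
  "is_triv_plus G n \<rho> a \<alpha> \<longleftrightarrow>
     (\<exists>S1 S2. is_submodule (carrier G) n \<rho> S1 \<and> is_submodule (carrier G) n \<rho> S2 \<and>
        S1 \<inter> S2 = {0\<^sub>v n} \<and> {u + v | u v. u \<in> S1 \<and> v \<in> S2} = carrier_vec n \<and>
        subquot_iso G n \<rho> {0\<^sub>v n} S1 1 triv_rep \<and> subquot_iso G n \<rho> {0\<^sub>v n} S2 a \<alpha>)"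

definition uniserial :: "('g, 'b) monoid_scheme \<Rightarrow> nat \<Rightarrow> ('g \<Rightarrow> 'f::field mat) \<Rightarrow> bool" where
  "uniserial G n \<rho> \<longleftrightarrow> (\<forall>S T. is_submodule (carrier G) n \<rho> S \<longrightarrow> is_submodule (carrier G) n \<rho> T
     \<longrightarrow> S \<subseteq> T \<or> T \<subseteq> S)"

text \<open>Uniserial with composition factors 1_G, A, 1_G (socle 1_G, then A, head 1_G).\<close>
definition uniserial_1A1 :: "('g, 'b) monoid_scheme \<Rightarrow> nat \<Rightarrow> ('g \<Rightarrow> 'f::field mat) \<Rightarrow> nat \<Rightarrow> ('g \<Rightarrow> 'f mat) \<Rightarrow> bool" where
  "uniserial_1A1 G n \<rho> a \<alpha> \<longleftrightarrow> uniserial G n \<rho> \<and>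
     (\<exists>W1 W2. is_submodule (carrier G) n \<rho> W1 \<and> is_submodule (carrier G) n \<rho> W2 \<and> W1 \<subseteq> W2 \<and>
        subquot_iso G n \<rho> {0\<^sub>v n} W1 1 triv_rep \<and>
        subquot_iso G n \<rho> W1 W2 a \<alpha> \<and>
        subquot_iso G n \<rho> W2 (carrier_vec n) 1 triv_rep)"

end

theory Submission
  imports Defs "Jordan_Normal_Form.Char_Poly"
begin

definition lc :: "nat \<Rightarrow> nat \<Rightarrow> 'i set \<Rightarrow> ('i \<Rightarrow> 'f::field) \<Rightarrow> ('i \<Rightarrow> 'f mat) \<Rightarrow> 'f mat" where
 "lc n m J c Y = mat n m (\<lambda>(a,b). \<Sum>j\<in>J. c j * Y j $$ (a,b))"

lemma lc_carrier[simp]: "lc n m J c Y \<in> carrier_mat n m" by (simp add: lc_def)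
lemma lc_dims[simp]: "dim_row (lc n m J c Y) = n" "dim_col (lc n m J c Y) = m" by (simp_all add: lc_def)
lemma lc_index: "a < n \<Longrightarrow> b < m \<Longrightarrow> lc n m J c Y $$ (a,b) = (\<Sum>j\<in>J. c j * Y j $$ (a,b))"
  by (simp add: lc_def)

lemma mult_lc: assumes A: "A \<in> carrier_mat k n" and Y: "\<And>j. j\<in>J \<Longrightarrow> Y j \<in> carrier_mat n m"
  shows "A * lc n m J c Y = lc k m J c (\<lambda>j. A * Y j)"
proof (rule eq_matI)
  fix a b assume ab: "a < dim_row (lc k m J c (\<lambda>j. A * Y j))" "b < dim_col (lc k m J c (\<lambda>j. A * Y j))"
  hence a: "a < k" and b: "b < m" by auto
  have "(A * lc n m J c Y) $$ (a,b) = (\<Sum>i<n. A $$ (a,i) * (\<Sum>j\<in>J. c j * Y j $$ (i,b)))"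
    using A a b by (simp add: scalar_prod_def lc_index lessThan_atLeast0)
  also have "\<dots> = (\<Sum>j\<in>J. c j * (\<Sum>i<n. A $$ (a,i) * Y j $$ (i,b)))"
    by (simp add: sum_distrib_left sum_distrib_right sum.swap[of _ J] mult.assoc mult.left_commute)
  also have "\<dots> = (\<Sum>j\<in>J. c j * (A * Y j) $$ (a,b))"
  proof (intro sum.cong refl)
    fix j assume "j \<in> J" with Y[OF this] A a b 
    show "c j * (\<Sum>i<n. A $$ (a,i) * Y j $$ (i,b)) = c j * (A * Y j) $$ (a,b)"
      by (simp add: scalar_prod_def lessThan_atLeast0)
  qed
  also have "\<dots> = lc k m J c (\<lambda>j. A * Y j) $$ (a,b)" using a b by (simp add: lc_index)
  finally show "(A * lc n m J c Y) $$ (a,b) = lc k m J c (\<lambda>j. A * Y j) $$ (a,b)" .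
qed (use A in auto)

lemma lc_mult: assumes B: "B \<in> carrier_mat m k" and Y: "\<And>j. j\<in>J \<Longrightarrow> Y j \<in> carrier_mat n m"
  shows "lc n m J c Y * B = lc n k J c (\<lambda>j. Y j * B)"
proof (rule eq_matI)
  fix a b assume ab: "a < dim_row (lc n k J c (\<lambda>j. Y j * B))" "b < dim_col (lc n k J c (\<lambda>j. Y j * B))"
  hence a: "a < n" and b: "b < k" by auto
  have "(lc n m J c Y * B) $$ (a,b) = (\<Sum>i<m. (\<Sum>j\<in>J. c j * Y j $$ (a,i)) * B $$ (i,b))"
    using B a b by (simp add: scalar_prod_def lc_index lessThan_atLeast0)
  also have "\<dots> = (\<Sum>j\<in>J. c j * (\<Sum>i<m. Y j $$ (a,i) * B $$ (i,b)))"
    by (simp add: sum_distrib_left sum_distrib_right sum.swap[of _ J] mult.assoc mult.left_commute)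
  also have "\<dots> = (\<Sum>j\<in>J. c j * (Y j * B) $$ (a,b))"
  proof (intro sum.cong refl)
    fix j assume "j \<in> J" with Y[OF this] B a b 
    show "c j * (\<Sum>i<m. Y j $$ (a,i) * B $$ (i,b)) = c j * (Y j * B) $$ (a,b)"
      by (simp add: scalar_prod_def lessThan_atLeast0)
  qed
  also have "\<dots> = lc n k J c (\<lambda>j. Y j * B) $$ (a,b)" using a b by (simp add: lc_index)
  finally show "(lc n m J c Y * B) $$ (a,b) = lc n k J c (\<lambda>j. Y j * B) $$ (a,b)" .
qed (use B in auto)

lemma lc_reindex: assumes "bij_betw \<sigma> J J"
  shows "lc n m J (\<lambda>_. 1) (\<lambda>j. Y (\<sigma> j)) = lc n m J (\<lambda>_. 1) Y"
  unfolding lc_def using sum.reindex_bij_betw[OF assms, of "\<lambda>j. Y j $$ _"] by simp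

lemma lc_cong: assumes "\<And>j. j \<in> J \<Longrightarrow> Y j = Z j" shows "lc n m J c Y = lc n m J c Z"
  unfolding lc_def by (rule arg_cong[where f="mat n m"], rule ext, auto intro!: sum.cong simp: assms)

lemma kron_carrier[simp]: "A \<in> carrier_mat a1 a2 \<Longrightarrow> B \<in> carrier_mat b1 b2 \<Longrightarrow> kron A B \<in> carrier_mat (a1*b1) (a2*b2)"
  by (auto simp: kron_def)

lemma divmod_lt: "i < a \<Longrightarrow> k < (b::nat) \<Longrightarrow> i*b+k < a*b \<and> (i*b+k) div b = i \<and> (i*b+k) mod b = k"
proof -
  assume i: "i < a" and k: "k < b"
  have "i*b+k < i*b+b" using k by simp
  also have "\<dots> = (Suc i)*b" by simp
  also have "\<dots> \<le> a*b" using i by (intro mult_le_mono1) simp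
  finally show ?thesis using k by simp
qed

lemma kron_index: assumes "A \<in> carrier_mat a1 a2" "B \<in> carrier_mat b1 b2" "i < a1" "k < b1" "j < a2" "l < b2"
  shows "kron A B $$ (i*b1+k, j*b2+l) = A $$ (i,j) * B $$ (k,l)"
  using assms divmod_lt[of i a1 k b1] divmod_lt[of j a2 l b2] by (simp add: kron_def)

lemma sum_split_mult: "(\<Sum>t<a*b. g t) = (\<Sum>i<a. \<Sum>k<b. g (i*b+k::nat))"
proof -
  have "(\<Sum>t<a*b. g t) = (\<Sum>i<a. sum g {i*b..<i*b+b})" by (simp add: sum.nat_group)
  also have "\<dots> = (\<Sum>i<a. \<Sum>k<b. g (i*b+k))"
  proof (rule sum.cong[OF refl])
    fix i
    have "sum g {i*b..<i*b+b} = sum (\<lambda>k. g (k + i*b)) {0..<b}"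
      using sum.shift_bounds_nat_ivl[of g 0 "i*b" b] by (simp add: add.commute)
    thus "sum g {i*b..<i*b+b} = (\<Sum>k<b. g (i*b+k))" by (simp add: lessThan_atLeast0 add.commute)
  qed
  finally show ?thesis .
qed

lemma kron_mult: assumes A: "A \<in> carrier_mat a1 a2" and B: "B \<in> carrier_mat b1 b2"
  and C: "C \<in> carrier_mat a2 a3" and D: "D \<in> carrier_mat b2 b3"
  shows "kron A B * kron C D = kron (A*C) (B*D)"
proof (rule eq_matI)
  have AC: "A*C \<in> carrier_mat a1 a3" and BD: "B*D \<in> carrier_mat b1 b3" using A B C D by auto
  fix r s assume "r < dim_row (kron (A*C) (B*D))" "s < dim_col (kron (A*C) (B*D))"
  hence r: "r < a1*b1" and s: "s < a3*b3" using kron_carrier[OF AC BD] by auto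
  have b1: "b1 > 0" using r by (cases b1) auto
  have b3: "b3 > 0" using s by (cases b3) auto
  define i k j l where "i = r div b1" "k = r mod b1" "j = s div b3" "l = s mod b3"
  have r': "r = i*b1+k" and s': "s = j*b3+l" unfolding i_k_j_l_def by simp_all
  have ik: "i < a1" "k < b1" using r b1 unfolding i_k_j_l_def
    by (simp_all add: less_mult_imp_div_less)
  have jl: "j < a3" "l < b3" using s b3 unfolding i_k_j_l_def
    by (simp_all add: less_mult_imp_div_less)
  have "(kron A B * kron C D) $$ (r,s) = (\<Sum>t<a2*b2. kron A B $$ (r,t) * kron C D $$ (t,s))"
    using r s A B C D by (simp add: scalar_prod_def lessThan_atLeast0 kron_def[of C D] kron_def[of A B])
  also have "\<dots> = (\<Sum>p<a2. \<Sum>q<b2. kron A B $$ (i*b1+k,p*b2+q) * kron C D $$ (p*b2+q,j*b3+l))"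
    unfolding sum_split_mult r' s' ..
  also have "\<dots> = (\<Sum>p<a2. \<Sum>q<b2. (A$$(i,p) * C$$(p,j)) * (B$$(k,q) * D$$(q,l)))"
  proof (intro sum.cong refl)
    fix p q assume p: "p \<in> {..<a2}" and q: "q \<in> {..<b2}"
    show "kron A B $$ (i*b1+k,p*b2+q) * kron C D $$ (p*b2+q,j*b3+l) = (A$$(i,p) * C$$(p,j)) * (B$$(k,q) * D$$(q,l))"
      using kron_index[OF A B ik(1) ik(2), of p q] kron_index[OF C D _ _ jl, of p q] p q by (simp add: ac_simps)
  qed
  also have "\<dots> = (\<Sum>p<a2. A$$(i,p) * C$$(p,j)) * (\<Sum>q<b2. B$$(k,q) * D$$(q,l))"
    by (simp add: sum_product)
  also have "\<dots> = (A*C)$$(i,j) * (B*D)$$(k,l)"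
    using A B C D ik jl by (simp add: scalar_prod_def lessThan_atLeast0)
  also have "\<dots> = kron (A*C) (B*D) $$ (r,s)"
    unfolding r' s' using ik jl by (simp add: kron_index[OF AC BD])
  finally show "(kron A B * kron C D) $$ (r,s) = kron (A*C) (B*D) $$ (r,s)" .
qed (use A B C D in \<open>auto simp: kron_def\<close>)


lemma mat_vec_zero[simp]: "A \<in> carrier_mat n m \<Longrightarrow> A *\<^sub>v 0\<^sub>v m = 0\<^sub>v n"
  by (intro eq_vecI) (auto simp: scalar_prod_def)

lemma scalar_prod_unit_right: "(v :: 'a :: field vec) \<in> carrier_vec n \<Longrightarrow> j < n \<Longrightarrow> v \<bullet> unit_vec n j = v $ j"
proof -
  assume v: "v \<in> carrier_vec n" and j: "j < n"
  have "(\<Sum>i=0..<n. v$i * (if i = j then 1 else 0)) = (\<Sum>i\<in>{0..<n}. if i = j then v$i else 0)"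
    by (rule sum.cong) auto
  hence "v \<bullet> unit_vec n j = (\<Sum>i\<in>{0..<n}. if i = j then v$i else 0)"
    using v by (simp add: scalar_prod_def unit_vec_def)
  then show ?thesis using j by simp
qed

lemma mat_unit_index: "(A :: 'a :: field mat) \<in> carrier_mat n m \<Longrightarrow> i < n \<Longrightarrow> j < m \<Longrightarrow> (A *\<^sub>v unit_vec m j) $ i = A $$ (i,j)"
  using scalar_prod_unit_right[of "row A i" m j] by simp

lemma schur:
  fixes \<rho> :: "'g \<Rightarrow> 'f::alg_closed_field mat"
  assumes irr: "irreducible_rep G n \<rho>" and Z: "Z \<in> carrier_mat n n"
    and comm: "\<And>g. g \<in> carrier G \<Longrightarrow> Z * \<rho> g = \<rho> g * Z"
  shows "\<exists>c. Z = c \<cdot>\<^sub>m 1\<^sub>m n"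
proof -
  from irr have rep: "is_rep G n \<rho>" and n: "n > 0"
    and irr': "\<And>S. is_submodule (carrier G) n \<rho> S \<Longrightarrow> S = {0\<^sub>v n} \<or> S = carrier_vec n"
    unfolding irreducible_rep_def by auto
  have rc: "\<And>g. g \<in> carrier G \<Longrightarrow> \<rho> g \<in> carrier_mat n n" using rep unfolding is_rep_def by auto
  have "degree (char_poly Z) = n" using degree_monic_char_poly[OF Z] by auto
  then obtain k where "poly (char_poly Z) k = 0" using alg_closed_imp_poly_has_root n by auto
  hence "eigenvalue Z k" using eigenvalue_root_char_poly[OF Z] by auto
  then obtain v where v: "v \<in> carrier_vec n" "v \<noteq> 0\<^sub>v n" "Z *\<^sub>v v = k \<cdot>\<^sub>v v"
    unfolding eigenvalue_def eigenvector_def using Z by auto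
  define S where "S = {w \<in> carrier_vec n. Z *\<^sub>v w = k \<cdot>\<^sub>v w}"
  have sub: "is_submodule (carrier G) n \<rho> S"
    unfolding is_submodule_def is_subspace_def
  proof (intro conjI ballI allI)
    show "S \<subseteq> carrier_vec n" unfolding S_def by auto
    show "0\<^sub>v n \<in> S" unfolding S_def using Z by auto
    fix u w assume u: "u \<in> S" and w: "w \<in> S"
    thus "u + w \<in> S" unfolding S_def using Z 
      by (auto simp: mult_add_distrib_mat_vec smult_add_distrib_vec)
  next
    fix a w assume w: "w \<in> S"
    thus "a \<cdot>\<^sub>v w \<in> S" unfolding S_def using Z
      by (auto simp: mult_mat_vec smult_smult_assoc mult.commute)
  next
    fix g w assume g: "g \<in> carrier G" and w: "w \<in> S"
    have "Z *\<^sub>v (\<rho> g *\<^sub>v w) = (Z * \<rho> g) *\<^sub>v w" using Z rc[OF g] w unfolding S_def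
      by (simp add: assoc_mult_mat_vec)
    also have "\<dots> = \<rho> g *\<^sub>v (Z *\<^sub>v w)" using Z rc[OF g] w comm[OF g] unfolding S_def
      by (simp add: assoc_mult_mat_vec)
    also have "\<dots> = k \<cdot>\<^sub>v (\<rho> g *\<^sub>v w)" using w rc[OF g] unfolding S_def by (simp add: mult_mat_vec)
    moreover have "\<rho> g *\<^sub>v w \<in> carrier_vec n" using rc[OF g] w unfolding S_def by auto
    ultimately show "\<rho> g *\<^sub>v w \<in> S" unfolding S_def by auto
  qed
  have "v \<in> S" using v unfolding S_def by auto
  hence S: "S = carrier_vec n" using irr'[OF sub] v by auto
  have "Z = k \<cdot>\<^sub>m 1\<^sub>m n"
  proof (rule eq_matI)
    fix i j assume ij: "i < dim_row (k \<cdot>\<^sub>m 1\<^sub>m n)" "j < dim_col (k \<cdot>\<^sub>m 1\<^sub>m n)"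
    hence i: "i < n" and j: "j < n" by auto
    have "unit_vec n j \<in> S" using S j by auto
    hence "Z *\<^sub>v unit_vec n j = k \<cdot>\<^sub>v unit_vec n j" unfolding S_def by auto
    hence "(Z *\<^sub>v unit_vec n j) $ i = (k \<cdot>\<^sub>v unit_vec n j) $ i" by simp
    thus "Z $$ (i,j) = (k \<cdot>\<^sub>m 1\<^sub>m n) $$ (i,j)" using i j mat_unit_index[OF Z i j]
      by (simp add: unit_vec_def)
  qed (use Z in auto)
  thus ?thesis by blast
qed


lemma rep_inv: assumes "is_rep G m \<rho>" "group G" "x \<in> carrier G"
  shows "\<rho> (inv\<^bsub>G\<^esub> x) * \<rho> x = 1\<^sub>m m" "\<rho> x * \<rho> (inv\<^bsub>G\<^esub> x) = 1\<^sub>m m"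
proof -
  interpret group G by fact
  show "\<rho> (inv\<^bsub>G\<^esub> x) * \<rho> x = 1\<^sub>m m" using assms unfolding is_rep_def
    by (metis inv_closed l_inv)
  show "\<rho> x * \<rho> (inv\<^bsub>G\<^esub> x) = 1\<^sub>m m" using assms unfolding is_rep_def
    by (metis inv_closed r_inv)
qed

locale setting =
  fixes G :: "'g monoid" (structure) and P :: "'g set"
  assumes grp: "group G" and fin: "finite (carrier G)" and subg: "subgroup P G"
begin

interpretation group G by (rule grp)

abbreviation "n \<equiv> ind_dim G P"
abbreviation "e \<equiv> coset_enum G P"

lemma P_sub: "P \<subseteq> carrier G" using subg by (rule subgroup.subset)

lemma lcosets_img: "lcosets_of G P = (\<lambda>x. x <#\<^bsub>G\<^esub> P) ` carrier G"
  unfolding lcosets_of_def by auto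

lemma fin_lcosets: "finite (lcosets_of G P)" unfolding lcosets_img using fin by simp

lemma e_bij: "bij_betw e {..<n} (lcosets_of G P)"
proof -
  have "\<exists>h. bij_betw h {..<n} (lcosets_of G P)"
    using ex_bij_betw_nat_finite[OF fin_lcosets] unfolding ind_dim_def lessThan_atLeast0 .
  thus ?thesis unfolding coset_enum_def by (rule someI_ex)
qed

lemma n_pos: "n > 0"
proof -
  have "P \<in> lcosets_of G P" unfolding lcosets_img using lcos_mult_one[OF P_sub]
    by (metis image_eqI one_closed)
  thus ?thesis unfolding ind_dim_def using fin_lcosets card_gt_0_iff by blast
qed

lemma e_in: "j < n \<Longrightarrow> e j \<in> lcosets_of G P" using e_bij bij_betwE by blast

lemma e_inj: "i < n \<Longrightarrow> j < n \<Longrightarrow> e i = e j \<Longrightarrow> i = j"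
  using e_bij unfolding bij_betw_def inj_on_def by auto

definition rep :: "nat \<Rightarrow> 'g" where "rep j = (SOME x. x \<in> carrier G \<and> e j = x <#\<^bsub>G\<^esub> P)"

lemma rep_prop: assumes "j < n" shows "rep j \<in> carrier G" "e j = rep j <#\<^bsub>G\<^esub> P"
proof -
  have "\<exists>x. x \<in> carrier G \<and> e j = x <#\<^bsub>G\<^esub> P" using e_in[OF assms] unfolding lcosets_img by auto
  from someI_ex[OF this] show "rep j \<in> carrier G" "e j = rep j <#\<^bsub>G\<^esub> P" unfolding rep_def by auto
qed

definition idx :: "'g set \<Rightarrow> nat" where "idx C = the_inv_into {..<n} e C"

lemma idx_prop: assumes "C \<in> lcosets_of G P" shows "idx C < n" "e (idx C) = C"
proof -
  have "idx C \<in> {..<n}" unfolding idx_def using e_bij assms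
    by (metis bij_betw_def the_inv_into_into subset_refl)
  thus "idx C < n" by simp
  show "e (idx C) = C" unfolding idx_def using e_bij assms
    by (metis bij_betw_def f_the_inv_into_f)
qed

definition act :: "'g \<Rightarrow> nat \<Rightarrow> nat" where "act g j = idx (g <#\<^bsub>G\<^esub> e j)"

lemma lcos_closed: assumes "g \<in> carrier G" "C \<in> lcosets_of G P" shows "g <#\<^bsub>G\<^esub> C \<in> lcosets_of G P"
proof -
  from assms(2) obtain x where x: "x \<in> carrier G" "C = x <#\<^bsub>G\<^esub> P" unfolding lcosets_img by auto
  have "g <#\<^bsub>G\<^esub> C = (g \<otimes> x) <#\<^bsub>G\<^esub> P" using x assms(1) lcos_m_assoc[OF P_sub] by simp
  thus ?thesis unfolding lcosets_img using x assms(1) by auto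
qed

lemma act_prop: assumes "g \<in> carrier G" "j < n" shows "act g j < n" "e (act g j) = g <#\<^bsub>G\<^esub> e j"
  using idx_prop[OF lcos_closed[OF assms(1) e_in[OF assms(2)]]] unfolding act_def by auto

lemma act_inv: assumes "g \<in> carrier G" "j < n" shows "act (inv g) (act g j) = j" "act g (act (inv g) j) = j"
proof -
  have "e (act (inv g) (act g j)) = inv g <#\<^bsub>G\<^esub> (g <#\<^bsub>G\<^esub> e j)"
    using act_prop assms by auto
  also have "\<dots> = e j" using assms rep_prop[OF assms(2)] lcos_m_assoc[OF P_sub] lcos_mult_one[OF P_sub]
    by (simp add: m_assoc[symmetric])
  finally show "act (inv g) (act g j) = j" using e_inj act_prop assms by auto
  have "e (act g (act (inv g) j)) = g <#\<^bsub>G\<^esub> (inv g <#\<^bsub>G\<^esub> e j)"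
    using act_prop assms by auto
  also have "\<dots> = e j" using assms rep_prop[OF assms(2)] lcos_m_assoc[OF P_sub] lcos_mult_one[OF P_sub]
    by (simp add: m_assoc[symmetric])
  finally show "act g (act (inv g) j) = j" using e_inj act_prop assms by auto
qed

lemma act_bij: assumes "g \<in> carrier G" shows "bij_betw (act g) {..<n} {..<n}"
  by (rule bij_betw_byWitness[of _ "act (inv g)"]) (use assms act_inv act_prop in auto)

lemma act_trans: assumes "i < n" "j < n" shows "\<exists>g\<in>carrier G. act g j = i"
proof -
  define g where "g = rep i \<otimes> inv (rep j)"
  have g: "g \<in> carrier G" unfolding g_def using rep_prop assms by auto
  have "e (act g j) = g <#\<^bsub>G\<^esub> e j" using act_prop g assms by auto
  also have "\<dots> = e i" unfolding g_def using rep_prop[OF assms(1)] rep_prop[OF assms(2)] lcos_m_assoc[OF P_sub]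
    by (simp add: m_assoc)
  finally show ?thesis using e_inj act_prop g assms by blast
qed

lemma act_mult: assumes "g \<in> carrier G" "h \<in> carrier G" "j < n" shows "act g (act h j) = act (g \<otimes> h) j"
proof -
  have "e (act g (act h j)) = e (act (g \<otimes> h) j)" using act_prop assms lcos_m_assoc[OF P_sub] rep_prop[OF assms(3)]
    by (simp add: m_assoc)
  thus ?thesis using e_inj act_prop assms by simp
qed

lemma same_coset: assumes "g \<in> carrier G" "j < n"
  shows "(g \<otimes> rep j) <#\<^bsub>G\<^esub> P = rep (act g j) <#\<^bsub>G\<^esub> P"
  using act_prop[OF assms] rep_prop[OF assms(2)] rep_prop[OF act_prop(1)[OF assms]] assms lcos_m_assoc[OF P_sub]
  by simp

end

context setting begin

interpretation group G by (rule grp)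

lemma W_carrier: "ind_triv_rep G P g \<in> carrier_mat n n" by (simp add: ind_triv_rep_def)

lemma W_index: assumes "g \<in> carrier G" "i < n" "j < n"
  shows "ind_triv_rep G P g $$ (i,j) = (if act g j = i then 1 else 0)"
proof -
  have "(g <#\<^bsub>G\<^esub> e j = e i) = (act g j = i)" using act_prop[OF assms(1,3)] e_inj assms by metis
  thus ?thesis using assms by (simp add: ind_triv_rep_def)
qed

lemma W_mult: fixes v :: "'f::field vec" assumes g: "g \<in> carrier G" and v: "v \<in> carrier_vec n"
  shows "ind_triv_rep G P g *\<^sub>v v = vec n (\<lambda>i. v $ act (inv g) i)"
proof (rule eq_vecI)
  fix i assume "i < dim_vec (vec n (\<lambda>i. v $ act (inv g) i))"
  hence i: "i < n" by simp
  have "(ind_triv_rep G P g *\<^sub>v v) $ i = (\<Sum>j\<in>{0..<n}. ind_triv_rep G P g $$ (i,j) * v $ j)"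
  proof -
    have d: "dim_row (ind_triv_rep G P g :: 'f mat) = n" "dim_col (ind_triv_rep G P g :: 'f mat) = n" by (simp_all add: ind_triv_rep_def)
    have ii: "i < dim_row (ind_triv_rep G P g :: 'f mat)" using d i by simp
    show ?thesis unfolding index_mult_mat_vec[OF ii] scalar_prod_def
      using v d i by (intro sum.cong) (auto simp: row_def)
  qed
  also have "\<dots> = (\<Sum>j\<in>{0..<n}. (if act g j = i then 1 else 0) * v $ j)"
    by (intro sum.cong refl) (simp add: W_index[OF g i])
  also have "\<dots> = (\<Sum>j\<in>{0..<n}. if j = act (inv g) i then v $ j else 0)"
  proof (rule sum.cong[OF refl])
    fix j assume j: "j \<in> {0..<n}"
    have "(act g j = i) = (j = act (inv g) i)" using act_inv[OF g] act_prop[OF g] j i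
      by (metis act_inv(1) act_inv(2) atLeastLessThan_iff g)
    thus "(if act g j = i then 1 else 0) * v $ j = (if j = act (inv g) i then v $ j else 0)" by simp
  qed
  also have "\<dots> = v $ act (inv g) i" using act_prop[of "inv g" i] g i by simp
  finally show "(ind_triv_rep G P g *\<^sub>v v) $ i = vec n (\<lambda>i. v $ act (inv g) i) $ i" using i by simp
qed (simp add: ind_triv_rep_def)

lemma W_unit: assumes g: "g \<in> carrier G" and j: "j < n"
  shows "ind_triv_rep G P g *\<^sub>v unit_vec n j = unit_vec n (act g j)"
proof -
  have "ind_triv_rep G P g *\<^sub>v unit_vec n j = vec n (\<lambda>i. unit_vec n j $ act (inv g) i)"
    using W_mult[OF g, of "unit_vec n j"] j by simp
  also have "\<dots> = unit_vec n (act g j)"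
  proof (rule eq_vecI)
    fix i assume "i < dim_vec (unit_vec n (act g j))" hence i: "i < n" by simp
    have "(act (inv g) i = j) = (i = act g j)" using act_inv[OF g] i j act_prop[of "inv g" i] g by metis
    thus "vec n (\<lambda>i. unit_vec n j $ act (inv g) i) $ i = unit_vec n (act g j) $ i"
      using i j act_prop[of "inv g" i] act_prop[OF g j] g by (simp add: unit_vec_def)
  qed simp
  finally show ?thesis .
qed

definition conjM :: "('g \<Rightarrow> 'f::field mat) \<Rightarrow> 'f mat \<Rightarrow> nat \<Rightarrow> 'f mat" where
  "conjM \<rho> M j = \<rho> (rep j) * M * \<rho> (inv (rep j))"

lemma rep_carrier: "is_rep G m \<rho> \<Longrightarrow> x \<in> carrier G \<Longrightarrow> \<rho> x \<in> carrier_mat m m"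
  unfolding is_rep_def by auto

lemma rep_mult: "is_rep G m \<rho> \<Longrightarrow> x \<in> carrier G \<Longrightarrow> y \<in> carrier G \<Longrightarrow> \<rho> (x \<otimes> y) = \<rho> x * \<rho> y"
  unfolding is_rep_def by auto

lemma conj_wd: assumes rep: "is_rep G m \<rho>" and M: "M \<in> End_rep P m \<rho>"
  and x: "x \<in> carrier G" and y: "y \<in> carrier G" and eq: "x <# P = y <# P"
  shows "\<rho> x * M * \<rho> (inv x) = \<rho> y * M * \<rho> (inv y)"
proof -
  have Mc: "M \<in> carrier_mat m m" and Mcomm: "\<And>h. h \<in> P \<Longrightarrow> M * \<rho> h = \<rho> h * M"
    using M unfolding End_rep_def by auto
  have "y \<in> y <# P" unfolding l_coset_def using subgroup.one_closed[OF subg] y by force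
  hence "y \<in> x <# P" using eq by simp
  then obtain p where p: "p \<in> P" and yp: "y = x \<otimes> p" unfolding l_coset_def by auto
  have pc: "p \<in> carrier G" using p P_sub by auto
  note c = rep_carrier[OF rep]
  have "\<rho> y = \<rho> x * \<rho> p" using yp rep_mult[OF rep x pc] by simp
  moreover have "\<rho> (inv y) = \<rho> (inv p) * \<rho> (inv x)" using yp rep_mult[OF rep] x pc by (simp add: inv_mult_group)
  ultimately have "\<rho> y * M * \<rho> (inv y) = \<rho> x * ((\<rho> p * M) * \<rho> (inv p)) * \<rho> (inv x)"
    using c x pc Mc by (simp add: assoc_mult_mat[of _ m m _ m _ m] mult_carrier_mat[of _ m m _ m])
  also have "\<rho> p * M = M * \<rho> p" using Mcomm[OF p] by simp
  also have "M * \<rho> p * \<rho> (inv p) = M" using c pc Mc rep_inv(2)[OF rep grp pc]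
    by (simp add: assoc_mult_mat[of _ m m _ m _ m] mult_carrier_mat[of _ m m _ m])
  finally show ?thesis by simp
qed

lemma conjM_carrier: "is_rep G m \<rho> \<Longrightarrow> M \<in> carrier_mat m m \<Longrightarrow> j < n \<Longrightarrow> conjM \<rho> M j \<in> carrier_mat m m"
  unfolding conjM_def using rep_prop rep_carrier by (metis inv_closed mult_carrier_mat)

lemma conj_act: assumes rep: "is_rep G m \<rho>" and M: "M \<in> End_rep P m \<rho>" and g: "g \<in> carrier G" and j: "j < n"
  shows "\<rho> g * conjM \<rho> M j * \<rho> (inv g) = conjM \<rho> M (act g j)"
proof -
  have Mc: "M \<in> carrier_mat m m" using M unfolding End_rep_def by auto
  note c = rep_carrier[OF rep]
  have r: "rep j \<in> carrier G" using rep_prop j by auto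
  have r2: "rep (act g j) \<in> carrier G" using rep_prop act_prop g j by auto
  have "\<rho> g * conjM \<rho> M j * \<rho> (inv g) = \<rho> (g \<otimes> rep j) * M * \<rho> (inv (g \<otimes> rep j))"
    unfolding conjM_def using c g r Mc rep_mult[OF rep] 
    by (simp add: inv_mult_group assoc_mult_mat[of _ m m _ m _ m] mult_carrier_mat[of _ m m _ m])
  also have "\<dots> = conjM \<rho> M (act g j)" unfolding conjM_def
    by (rule conj_wd[OF rep M]) (use g r r2 same_coset[OF g j] in auto)
  finally show ?thesis .
qed

lemma conj_comm: assumes rep: "is_rep G m \<rho>" and M: "M \<in> End_rep P m \<rho>" and g: "g \<in> carrier G" and j: "j < n"
  shows "\<rho> g * conjM \<rho> M j = conjM \<rho> M (act g j) * \<rho> g"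
proof -
  have Mc: "M \<in> carrier_mat m m" using M unfolding End_rep_def by auto
  note c = rep_carrier[OF rep]
  have cj: "conjM \<rho> M j \<in> carrier_mat m m" using conjM_carrier[OF rep Mc j] .
  have "conjM \<rho> M (act g j) * \<rho> g = \<rho> g * conjM \<rho> M j * \<rho> (inv g) * \<rho> g"
    using conj_act[OF assms] by simp
  also have "\<dots> = \<rho> g * conjM \<rho> M j" using c g cj rep_inv(1)[OF rep grp g]
    by (simp add: assoc_mult_mat[of _ m m _ m _ m] mult_carrier_mat[of _ m m _ m])
  finally show ?thesis by simp
qed

end

lemma subspace_diff: "is_subspace n S \<Longrightarrow> u \<in> S \<Longrightarrow> v \<in> S \<Longrightarrow> u + (-1) \<cdot>\<^sub>v v \<in> S"
proof -
  assume "is_subspace n S" "u \<in> S" "v \<in> S"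
  hence "(-1) \<cdot>\<^sub>v v \<in> S" unfolding is_subspace_def by blast
  thus ?thesis using \<open>is_subspace n S\<close> \<open>u \<in> S\<close> unfolding is_subspace_def by blast
qed

lemma vec_diff_cancel: "(w :: 'a::field vec) \<in> carrier_vec n \<Longrightarrow> k \<in> carrier_vec n \<Longrightarrow> (w + (-1) \<cdot>\<^sub>v k) + k = w"
  by (intro eq_vecI) auto

lemma vec_diff_zero: "(w :: 'a::field vec) \<in> carrier_vec n \<Longrightarrow> k \<in> carrier_vec n \<Longrightarrow> w + (-1) \<cdot>\<^sub>v k = 0\<^sub>v n \<Longrightarrow> w = k"
proof -
  assume w: "w \<in> carrier_vec n" and k: "k \<in> carrier_vec n" and z: "w + (-1) \<cdot>\<^sub>v k = 0\<^sub>v n"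
  have "w = (w + (-1) \<cdot>\<^sub>v k) + k" using vec_diff_cancel[OF w k] by simp
  also have "\<dots> = k" using z k by simp
  finally show ?thesis .
qed

lemma lin_diff: "(F :: 'a::field mat) \<in> carrier_mat m n \<Longrightarrow> w \<in> carrier_vec n \<Longrightarrow> k \<in> carrier_vec n \<Longrightarrow>
   F *\<^sub>v (w + (-1) \<cdot>\<^sub>v k) = F *\<^sub>v w + (-1) \<cdot>\<^sub>v (F *\<^sub>v k)"
  by (simp add: mult_add_distrib_mat_vec mult_mat_vec)

definition ones :: "nat \<Rightarrow> 'a::field vec" where "ones n = vec n (\<lambda>_. 1)"

lemma ones_carrier[simp]: "ones n \<in> carrier_vec n" by (simp add: ones_def)

lemma const_ones: assumes "(v :: 'a::field vec) \<in> carrier_vec n" "\<And>i j. i < n \<Longrightarrow> j < n \<Longrightarrow> v $ i = v $ j" "0 < n"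
  shows "v = (v $ 0) \<cdot>\<^sub>v ones n"
proof (rule eq_vecI)
  fix i assume "i < dim_vec ((v $ 0) \<cdot>\<^sub>v ones n)"
  hence i: "i < n" by (simp add: ones_def)
  show "v $ i = ((v $ 0) \<cdot>\<^sub>v ones n) $ i" using assms(2)[OF i assms(3)] i by (simp add: ones_def)
qed (use assms(1) in \<open>simp add: ones_def\<close>)

lemma subspace_smult: "is_subspace n S \<Longrightarrow> v \<in> S \<Longrightarrow> a \<cdot>\<^sub>v v \<in> S"
  unfolding is_subspace_def by blast
lemma subspace_add: "is_subspace n S \<Longrightarrow> u \<in> S \<Longrightarrow> v \<in> S \<Longrightarrow> u + v \<in> S"
  unfolding is_subspace_def by blast
lemma subspace_carrier: "is_subspace n S \<Longrightarrow> v \<in> S \<Longrightarrow> v \<in> carrier_vec n"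
  unfolding is_subspace_def by blast
lemma subspace_zero: "is_subspace n S \<Longrightarrow> 0\<^sub>v n \<in> S"
  unfolding is_subspace_def by blast

lemma subquot_isoD: assumes "subquot_iso G n \<rho> S T m \<sigma>"
  obtains F where "F \<in> carrier_mat m n" "(\<lambda>v. F *\<^sub>v v) ` T = carrier_vec m" "{v\<in>T. F *\<^sub>v v = 0\<^sub>v m} = S"
    "\<And>g v. g \<in> carrier G \<Longrightarrow> v \<in> T \<Longrightarrow> F *\<^sub>v (\<rho> g *\<^sub>v v) = \<sigma> g *\<^sub>v (F *\<^sub>v v)"
proof -
  from assms obtain F where F: "F \<in> carrier_mat m n" and r: "(\<lambda>v. F *\<^sub>v v) ` T = carrier_vec m \<and>
        {v\<in>T. F *\<^sub>v v = 0\<^sub>v m} = S \<and>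
        (\<forall>g\<in>carrier G. \<forall>v\<in>T. F *\<^sub>v (\<rho> g *\<^sub>v v) = \<sigma> g *\<^sub>v (F *\<^sub>v v))"
    unfolding subquot_iso_def by (rule bexE)
  note a = r[THEN conjunct1] and b = r[THEN conjunct2, THEN conjunct1] and c = r[THEN conjunct2, THEN conjunct2]
  show ?thesis by (rule that[OF F a b]) (use c in blast)
qed

context setting begin
interpretation group G by (rule grp)


lemma triv_const: fixes S :: "'f::field vec set"
  assumes sub: "is_submodule (carrier G) n (ind_triv_rep G P) S"
  and iso: "subquot_iso G n (ind_triv_rep G P) {0\<^sub>v n} S 1 triv_rep"
  and v: "v \<in> S" and i: "i < n" and j: "j < n"
  shows "v $ i = v $ j"
proof -
  obtain F where F: "F \<in> carrier_mat 1 n" and surj: "(\<lambda>v. F *\<^sub>v v) ` S = carrier_vec 1" and ker: "{v\<in>S. F *\<^sub>v v = 0\<^sub>v 1} = {0\<^sub>v n}"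
    and eqv: "\<And>g v. g \<in> carrier G \<Longrightarrow> v \<in> S \<Longrightarrow> F *\<^sub>v (ind_triv_rep G P g *\<^sub>v v) = triv_rep g *\<^sub>v (F *\<^sub>v v)"
    using subquot_isoD[OF iso] by blast
  have ss: "is_subspace n S" and inv: "\<And>g v. g \<in> carrier G \<Longrightarrow> v \<in> S \<Longrightarrow> ind_triv_rep G P g *\<^sub>v v \<in> S"
    using sub unfolding is_submodule_def by auto
  have vc: "v \<in> carrier_vec n" using subspace_carrier[OF ss v] .
  obtain g where g: "g \<in> carrier G" "act g j = i" using act_trans[OF i j] by blast
  have gv: "ind_triv_rep G P g *\<^sub>v v \<in> S" using inv g v by auto
  have gvc: "ind_triv_rep G P g *\<^sub>v v \<in> carrier_vec n" using mult_mat_vec_carrier[OF W_carrier vc] .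
  have "F *\<^sub>v (ind_triv_rep G P g *\<^sub>v v) = F *\<^sub>v v"
    using eqv[OF g(1) v] F vc by (simp add: triv_rep_def)
  hence "F *\<^sub>v (ind_triv_rep G P g *\<^sub>v v + (-1) \<cdot>\<^sub>v v) = F *\<^sub>v v + (-1) \<cdot>\<^sub>v (F *\<^sub>v v)"
    using lin_diff[OF F gvc vc] by simp
  also have "\<dots> = 0\<^sub>v 1" using F vc by (intro eq_vecI) simp_all
  finally have "F *\<^sub>v (ind_triv_rep G P g *\<^sub>v v + (-1) \<cdot>\<^sub>v v) = 0\<^sub>v 1" .
  moreover have "ind_triv_rep G P g *\<^sub>v v + (-1) \<cdot>\<^sub>v v \<in> S" using subspace_diff[OF ss gv v] .
  ultimately have "ind_triv_rep G P g *\<^sub>v v + (-1) \<cdot>\<^sub>v v \<in> {v\<in>S. F *\<^sub>v v = 0\<^sub>v 1}" by simp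
  hence "ind_triv_rep G P g *\<^sub>v v + (-1) \<cdot>\<^sub>v v = 0\<^sub>v n" unfolding ker by simp
  hence "ind_triv_rep G P g *\<^sub>v v = v" using vec_diff_zero gvc vc by blast
  hence "(ind_triv_rep G P g *\<^sub>v v) $ i = v $ i" by simp
  moreover have "(ind_triv_rep G P g *\<^sub>v v) $ i = v $ j"
    using W_mult[OF g(1) vc] i act_inv(1)[OF g(1) j] g(2) by simp
  ultimately show ?thesis by simp
qed

lemma transport:
  fixes \<rho> :: "'g \<Rightarrow> 'f::field mat"
  assumes iso: "subquot_iso G n \<rho> S T m \<sigma>" and irr: "irreducible_rep G m \<sigma>"
    and K: "is_submodule (carrier G) n \<rho> K" and T: "is_submodule (carrier G) n \<rho> T"
    and SK: "S \<subseteq> K" and KT: "K \<subseteq> T"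
  shows "K = S \<or> K = T"
proof -
  obtain F where F: "F \<in> carrier_mat m n" and surj: "(\<lambda>v. F *\<^sub>v v) ` T = carrier_vec m"
    and ker: "{v\<in>T. F *\<^sub>v v = 0\<^sub>v m} = S"
    and eqv: "\<And>g v. g \<in> carrier G \<Longrightarrow> v \<in> T \<Longrightarrow> F *\<^sub>v (\<rho> g *\<^sub>v v) = \<sigma> g *\<^sub>v (F *\<^sub>v v)"
    using subquot_isoD[OF iso] by blast
  have ssK: "is_subspace n K" and invK: "\<And>g v. g \<in> carrier G \<Longrightarrow> v \<in> K \<Longrightarrow> \<rho> g *\<^sub>v v \<in> K"
    using K unfolding is_submodule_def by auto
  have ssT: "is_subspace n T" using T unfolding is_submodule_def by auto
  have Kc: "\<And>v. v \<in> K \<Longrightarrow> v \<in> carrier_vec n" using subspace_carrier[OF ssK] .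
  define I where "I = (\<lambda>v. F *\<^sub>v v) ` K"
  have subI: "is_submodule (carrier G) m \<sigma> I"
    unfolding is_submodule_def is_subspace_def
  proof (intro conjI ballI allI)
    show "I \<subseteq> carrier_vec m" unfolding I_def using F Kc by auto
    show "0\<^sub>v m \<in> I" unfolding I_def using subspace_zero[OF ssK] F by (auto intro!: image_eqI[of _ _ "0\<^sub>v n"])
  next
    fix u v assume "u \<in> I" "v \<in> I"
    then obtain u' v' where u': "u' \<in> K" "u = F *\<^sub>v u'" and v': "v' \<in> K" "v = F *\<^sub>v v'" unfolding I_def by auto
    have "u + v = F *\<^sub>v (u' + v')" using u' v' F Kc by (simp add: mult_add_distrib_mat_vec)
    thus "u + v \<in> I" unfolding I_def using subspace_add[OF ssK u'(1) v'(1)] by auto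
  next
    fix a v assume "v \<in> I"
    then obtain v' where v': "v' \<in> K" "v = F *\<^sub>v v'" unfolding I_def by auto
    have "a \<cdot>\<^sub>v v = F *\<^sub>v (a \<cdot>\<^sub>v v')" using v' F Kc by (simp add: mult_mat_vec)
    thus "a \<cdot>\<^sub>v v \<in> I" unfolding I_def using subspace_smult[OF ssK v'(1)] by auto
  next
    fix g v assume g: "g \<in> carrier G" and "v \<in> I"
    then obtain v' where v': "v' \<in> K" "v = F *\<^sub>v v'" unfolding I_def by auto
    have "\<sigma> g *\<^sub>v v = F *\<^sub>v (\<rho> g *\<^sub>v v')" using eqv[OF g] v' KT by auto
    thus "\<sigma> g *\<^sub>v v \<in> I" unfolding I_def using invK[OF g v'(1)] by auto
  qed
  from irr subI have "I = {0\<^sub>v m} \<or> I = carrier_vec m" unfolding irreducible_rep_def by blast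
  thus ?thesis
  proof
    assume "I = {0\<^sub>v m}"
    have "K \<subseteq> S"
    proof
      fix k assume k: "k \<in> K"
      hence "F *\<^sub>v k \<in> I" unfolding I_def by blast
      hence "F *\<^sub>v k = 0\<^sub>v m" using \<open>I = {0\<^sub>v m}\<close> by simp
      hence "k \<in> {v\<in>T. F *\<^sub>v v = 0\<^sub>v m}" using k KT by auto
      thus "k \<in> S" unfolding ker .
    qed
    thus ?thesis using SK by auto
  next
    assume I: "I = carrier_vec m"
    have "T \<subseteq> K"
    proof
      fix w assume w: "w \<in> T"
      have wc: "w \<in> carrier_vec n" using subspace_carrier[OF ssT w] .
      have "F *\<^sub>v w \<in> I" using I F wc by auto
      then obtain k where k: "k \<in> K" "F *\<^sub>v w = F *\<^sub>v k" unfolding I_def by auto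
      have kc: "k \<in> carrier_vec n" using Kc k by auto
      have "w + (-1) \<cdot>\<^sub>v k \<in> T" using subspace_diff[OF ssT w] k KT by auto
      moreover have "F *\<^sub>v (w + (-1) \<cdot>\<^sub>v k) = 0\<^sub>v m"
      proof -
        have "F *\<^sub>v (w + (-1) \<cdot>\<^sub>v k) = F *\<^sub>v k + (-1) \<cdot>\<^sub>v (F *\<^sub>v k)" using lin_diff[OF F wc kc] k(2) by simp
        also have "\<dots> = 0\<^sub>v m" using F kc by (intro eq_vecI) simp_all
        finally show ?thesis .
      qed
      ultimately have "w + (-1) \<cdot>\<^sub>v k \<in> {v\<in>T. F *\<^sub>v v = 0\<^sub>v m}" by simp
      hence "w + (-1) \<cdot>\<^sub>v k \<in> K" unfolding ker using SK by blast
      hence "(w + (-1) \<cdot>\<^sub>v k) + k \<in> K" using subspace_add[OF ssK _ k(1)] by blast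
      thus "w \<in> K" using vec_diff_cancel[OF wc kc] by simp
    qed
    thus ?thesis using KT by auto
  qed
qed

end

context setting begin
interpretation group G by (rule grp)

abbreviation "W \<equiv> ind_triv_rep G P"

lemma ones_in: fixes S :: "'f::field vec set"
  assumes sub: "is_submodule (carrier G) n W S"
  and iso: "subquot_iso G n W {0\<^sub>v n} S 1 triv_rep"
  shows "ones n \<in> S"
proof -
  obtain F where F: "F \<in> carrier_mat 1 n" and surj: "(\<lambda>v. F *\<^sub>v v) ` S = carrier_vec 1"
    and ker: "{v\<in>S. F *\<^sub>v v = 0\<^sub>v 1} = {0\<^sub>v n}"
    and eqv: "\<And>g v. g \<in> carrier G \<Longrightarrow> v \<in> S \<Longrightarrow> F *\<^sub>v (W g *\<^sub>v v) = triv_rep g *\<^sub>v (F *\<^sub>v v)"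
    using subquot_isoD[OF iso] by blast
  have ss: "is_subspace n S" using sub unfolding is_submodule_def by auto
  have "unit_vec 1 0 \<in> carrier_vec 1" by simp
  then obtain w where w: "w \<in> S" "F *\<^sub>v w = unit_vec 1 0" using surj by (metis imageE)
  have wc: "w \<in> carrier_vec n" using subspace_carrier[OF ss w(1)] .
  have wconst: "\<And>i j. i < n \<Longrightarrow> j < n \<Longrightarrow> w $ i = w $ j" using triv_const[OF sub iso w(1)] by blast
  have w0: "w $ 0 \<noteq> 0"
  proof
    assume "w $ 0 = 0"
    hence "w = 0\<^sub>v n"
    proof -
      assume w00: "w $ 0 = 0"
      show ?thesis
      proof (rule eq_vecI)
        fix i assume "i < dim_vec (0\<^sub>v n :: 'f vec)" hence i: "i < n" by simp
        show "w $ i = 0\<^sub>v n $ i" using wconst[OF i n_pos] w00 i by simp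
      qed (use wc in simp)
    qed
    hence "F *\<^sub>v w = 0\<^sub>v 1" using F by simp
    with w(2) have "unit_vec 1 0 = (0\<^sub>v 1 :: 'f vec)" by simp
    hence "unit_vec 1 0 $ 0 = (0\<^sub>v 1 :: 'f vec) $ 0" by simp
    thus False by simp
  qed
  have "ones n = (1 / w $ 0) \<cdot>\<^sub>v w"
  proof (rule eq_vecI)
    fix i assume "i < dim_vec ((1 / w $ 0) \<cdot>\<^sub>v w)" hence i: "i < n" using wc by simp
    show "ones n $ i = ((1 / w $ 0) \<cdot>\<^sub>v w) $ i" using wconst[OF i n_pos] w0 i wc by (simp add: ones_def)
  qed (use wc in \<open>simp add: ones_def\<close>)
  thus ?thesis using subspace_smult[OF ss w(1)] by simp
qed

lemma top_W0: fixes T :: "'f::field vec set"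
  assumes iso: "subquot_iso G n W T (carrier_vec n) 1 triv_rep"
  shows "T = {v \<in> carrier_vec n. (\<Sum>i<n. v $ i) = 0}"
proof -
  obtain F where F: "F \<in> carrier_mat 1 n" and surj: "(\<lambda>v. F *\<^sub>v v) ` carrier_vec n = carrier_vec 1"
    and ker: "{v\<in>carrier_vec n. F *\<^sub>v v = 0\<^sub>v 1} = T"
    and eqv: "\<And>g v. g \<in> carrier G \<Longrightarrow> v \<in> carrier_vec n \<Longrightarrow> F *\<^sub>v (W g *\<^sub>v v) = triv_rep g *\<^sub>v (F *\<^sub>v v)"
    using subquot_isoD[OF iso] by blast
  have Fconst: "F $$ (0,i) = F $$ (0,0)" if i: "i < n" for i
  proof -
    obtain g where g: "g \<in> carrier G" "act g 0 = i" using act_trans[OF i n_pos] by blast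
    have "F *\<^sub>v (W g *\<^sub>v unit_vec n 0) = F *\<^sub>v unit_vec n 0"
      using eqv[OF g(1), of "unit_vec n 0"] F by (simp add: triv_rep_def)
    moreover have "(W g :: 'f mat) *\<^sub>v unit_vec n 0 = unit_vec n i" using W_unit[OF g(1) n_pos] g(2) by simp
    ultimately have "F *\<^sub>v unit_vec n i = F *\<^sub>v unit_vec n 0" by simp
    hence "(F *\<^sub>v unit_vec n i) $ 0 = (F *\<^sub>v unit_vec n 0) $ 0" by simp
    thus ?thesis using mat_unit_index[OF F, of 0 i] mat_unit_index[OF F, of 0 0] i n_pos by simp
  qed
  define q where "q = F $$ (0,0)"
  have Fv: "F *\<^sub>v v = vec 1 (\<lambda>_. q * (\<Sum>i<n. v $ i))" if v: "v \<in> carrier_vec n" for v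
  proof (rule eq_vecI)
    fix k assume "k < dim_vec (vec 1 (\<lambda>_. q * (\<Sum>i<n. v $ i)))" hence k: "k = 0" by simp
    have "(F *\<^sub>v v) $ 0 = (\<Sum>i\<in>{0..<n}. F $$ (0,i) * v $ i)" using F v by (simp add: scalar_prod_def)
    also have "\<dots> = (\<Sum>i<n. q * v $ i)" unfolding lessThan_atLeast0
    proof (intro sum.cong refl)
      fix i assume "i \<in> {0..<n}" thus "F $$ (0,i) * v $ i = q * v $ i" using Fconst[of i] unfolding q_def by simp
    qed
    finally show "(F *\<^sub>v v) $ k = vec 1 (\<lambda>_. q * (\<Sum>i<n. v $ i)) $ k" using k by (simp add: sum_distrib_left)
  qed (use F in auto)
  have q: "q \<noteq> 0"
  proof
    assume q0: "q = 0"
    have "unit_vec 1 0 \<in> carrier_vec 1" by simp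
    then obtain w where w: "w \<in> carrier_vec n" "F *\<^sub>v w = unit_vec 1 0" using surj by (metis imageE)
    have "F *\<^sub>v w = 0\<^sub>v 1" using Fv[OF w(1)] q0 by (intro eq_vecI) auto
    with w(2) have "unit_vec 1 0 = (0\<^sub>v 1 :: 'f vec)" by simp
    hence "unit_vec 1 0 $ 0 = (0\<^sub>v 1 :: 'f vec) $ 0" by simp
    thus False by simp
  qed
  have "T = {v\<in>carrier_vec n. F *\<^sub>v v = 0\<^sub>v 1}" using ker by simp
  also have "\<dots> = {v \<in> carrier_vec n. (\<Sum>i<n. v $ i) = 0}"
  proof (intro Collect_cong conj_cong refl)
    fix v :: "'f vec" assume v: "v \<in> carrier_vec n"
    have "(F *\<^sub>v v = 0\<^sub>v 1) = (vec 1 (\<lambda>_. q * (\<Sum>i<n. v $ i)) = (0\<^sub>v 1 :: 'f vec))" using Fv[OF v] by simp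
    also have "\<dots> = (q * (\<Sum>i<n. v $ i) = 0)"
    proof
      assume "vec 1 (\<lambda>_. q * (\<Sum>i<n. v $ i)) = (0\<^sub>v 1 :: 'f vec)"
      hence "vec 1 (\<lambda>_. q * (\<Sum>i<n. v $ i)) $ 0 = (0\<^sub>v 1 :: 'f vec) $ 0" by simp
      thus "q * (\<Sum>i<n. v $ i) = 0" by simp
    qed (auto intro!: eq_vecI)
    also have "\<dots> = ((\<Sum>i<n. v $ i) = 0)" using q by simp
    finally show "(F *\<^sub>v v = 0\<^sub>v 1) = ((\<Sum>i<n. v $ i) = 0)" .
  qed
  finally show ?thesis .
qed

lemma submodule_inter: "is_submodule H m \<rho> A \<Longrightarrow> is_submodule H m \<rho> B \<Longrightarrow> is_submodule H m \<rho> (A \<inter> B)"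
  unfolding is_submodule_def is_subspace_def by auto

lemma direct_case: fixes K :: "'f::field vec set" and \<alpha> :: "'g \<Rightarrow> 'f mat"
  assumes tp: "is_triv_plus G n W a \<alpha>" and irr: "irreducible_rep G a \<alpha>"
    and K: "is_submodule (carrier G) n W K" and onesK: "ones n \<in> K"
    and f: "f \<in> K" and i: "i < n" and j: "j < n" and fij: "f $ i \<noteq> f $ j"
    and u0: "unit_vec n 0 \<notin> K"
  shows False
proof -
  obtain S1 S2 where r: "is_submodule (carrier G) n W S1 \<and> is_submodule (carrier G) n W S2 \<and>
        S1 \<inter> S2 = {0\<^sub>v n} \<and> {u + v | u v. u \<in> S1 \<and> v \<in> S2} = carrier_vec n \<and>
        subquot_iso G n W {0\<^sub>v n} S1 1 triv_rep \<and> subquot_iso G n W {0\<^sub>v n} S2 a \<alpha>"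
    using tp unfolding is_triv_plus_def by (elim exE)
  note S1 = r[THEN conjunct1] and S2 = r[THEN conjunct2, THEN conjunct1]
    and sum = r[THEN conjunct2, THEN conjunct2, THEN conjunct2, THEN conjunct1]
    and iso1 = r[THEN conjunct2, THEN conjunct2, THEN conjunct2, THEN conjunct2, THEN conjunct1]
    and iso2 = r[THEN conjunct2, THEN conjunct2, THEN conjunct2, THEN conjunct2, THEN conjunct2]
  have ssK: "is_subspace n K" using K unfolding is_submodule_def by auto
  have ss1: "is_subspace n S1" using S1 unfolding is_submodule_def by auto
  have ss2: "is_subspace n S2" using S2 unfolding is_submodule_def by auto
  have S1K: "u \<in> K" if u: "u \<in> S1" for u
  proof -
    have "u = (u $ 0) \<cdot>\<^sub>v ones n"
      using const_ones[OF subspace_carrier[OF ss1 u] _ n_pos] triv_const[OF S1 iso1 u] by blast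
    thus ?thesis using subspace_smult[OF ssK onesK] by metis
  qed
  have K2: "is_submodule (carrier G) n W (K \<inter> S2)" using submodule_inter[OF K S2] .
  have dj: "K \<inter> S2 = {0\<^sub>v n} \<or> K \<inter> S2 = S2"
    by (rule transport[OF iso2 irr K2 S2]) (use subspace_zero[OF ssK] subspace_zero[OF ss2] in auto)
  have fc: "f \<in> carrier_vec n" using subspace_carrier[OF ssK f] .
  then obtain u v where uv: "f = u + v" "u \<in> S1" "v \<in> S2" using sum by blast
  have uc: "u \<in> carrier_vec n" and vc: "v \<in> carrier_vec n" using subspace_carrier ss1 ss2 uv by auto
  have "v = f + (-1) \<cdot>\<^sub>v u" using uv uc vc by (intro eq_vecI) auto
  hence vK: "v \<in> K" using subspace_diff[OF ssK f S1K[OF uv(2)]] by simp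
  from dj show False
  proof
    assume "K \<inter> S2 = {0\<^sub>v n}"
    hence "v = 0\<^sub>v n" using vK uv(3) by blast
    hence "f = u" using uv uc by simp
    thus False using triv_const[OF S1 iso1 uv(2) i j] fij by simp
  next
    assume K2: "K \<inter> S2 = S2"
    have "unit_vec n 0 \<in> carrier_vec n" by simp
    then obtain u' v' where uv': "unit_vec n 0 = u' + v'" "u' \<in> S1" "v' \<in> S2" using sum by blast
    have "u' \<in> K" "v' \<in> K" using S1K uv' K2 by auto
    hence "unit_vec n 0 \<in> K" using subspace_add[OF ssK] uv' by simp
    thus False using u0 by simp
  qed
qed

lemma uniserial_case: fixes K :: "'f::field vec set" and \<alpha> :: "'g \<Rightarrow> 'f mat"
  assumes us: "uniserial_1A1 G n W a \<alpha>" and irr: "irreducible_rep G a \<alpha>"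
    and K: "is_submodule (carrier G) n W K"
    and f: "f \<in> K" and i: "i < n" and j: "j < n" and fij: "f $ i \<noteq> f $ j"
  shows "{v \<in> carrier_vec n. (\<Sum>i<n. v $ i) = 0} \<subseteq> K"
proof -
  have ch: "uniserial G n (W :: 'g \<Rightarrow> 'f mat)" using us unfolding uniserial_1A1_def by (rule conjunct1)
  obtain W1 W2 where r: "is_submodule (carrier G) n W W1 \<and> is_submodule (carrier G) n W W2 \<and> W1 \<subseteq> W2 \<and>
        subquot_iso G n W {0\<^sub>v n} W1 1 triv_rep \<and>
        subquot_iso G n W W1 W2 a \<alpha> \<and>
        subquot_iso G n W W2 (carrier_vec n) 1 triv_rep"
    using us[unfolded uniserial_1A1_def, THEN conjunct2] by (elim exE)
  note W1 = r[THEN conjunct1] and W2 = r[THEN conjunct2, THEN conjunct1]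
    and W12 = r[THEN conjunct2, THEN conjunct2, THEN conjunct1]
    and iso1 = r[THEN conjunct2, THEN conjunct2, THEN conjunct2, THEN conjunct1]
    and iso2 = r[THEN conjunct2, THEN conjunct2, THEN conjunct2, THEN conjunct2, THEN conjunct1]
    and iso3 = r[THEN conjunct2, THEN conjunct2, THEN conjunct2, THEN conjunct2, THEN conjunct2]
  have W2eq: "W2 = {v \<in> carrier_vec n. (\<Sum>i<n. v $ i) = 0}" using top_W0[OF iso3] .
  have cmp: "\<And>S T :: 'f vec set. is_submodule (carrier G) n W S \<Longrightarrow> is_submodule (carrier G) n W T \<Longrightarrow> S \<subseteq> T \<or> T \<subseteq> S"
    using ch unfolding uniserial_def by blast
  have notW1: "\<not> K \<subseteq> W1" using triv_const[OF W1 iso1 _ i j] f fij by blast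
  have "W2 \<subseteq> K"
  proof (cases "W2 \<subseteq> K")
    case False
    hence KW2: "K \<subseteq> W2" using cmp[OF K W2] by blast
    have W1K: "W1 \<subseteq> K" using cmp[OF K W1] notW1 by blast
    have "K = W1 \<or> K = W2" by (rule transport[OF iso2 irr K W2 W1K KW2])
    thus ?thesis using notW1 by auto
  qed simp
  thus ?thesis using W2eq by simp
qed

end

lemma lc_cong2: assumes "\<And>j. j \<in> J \<Longrightarrow> c j = d j" "\<And>j. j \<in> J \<Longrightarrow> Y j = Z j"
  shows "lc n m J c Y = lc n m J d Z"
  unfolding lc_def by (rule arg_cong[where f="mat n m"], rule ext, auto intro!: sum.cong simp: assms)

lemma lc_reindex2: assumes "bij_betw \<sigma> J J"
  shows "lc n m J (\<lambda>j. c (\<sigma> j)) (\<lambda>j. Y (\<sigma> j)) = lc n m J c Y"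
  unfolding lc_def using sum.reindex_bij_betw[OF assms, of "\<lambda>j. c j * Y j $$ _"] by simp

lemma scal_inj: assumes "(c :: 'a::field) \<cdot>\<^sub>m 1\<^sub>m m = d \<cdot>\<^sub>m 1\<^sub>m m" "0 < m" shows "c = d"
proof -
  have "(c \<cdot>\<^sub>m 1\<^sub>m m) $$ (0,0) = (d \<cdot>\<^sub>m 1\<^sub>m m) $$ (0,0)" using assms(1) by simp
  thus ?thesis using assms(2) by simp
qed

context setting begin
interpretation group G by (rule grp)

lemma rep_cancel: assumes rep: "is_rep G m \<rho>" and x: "x \<in> carrier G" and X: "X \<in> carrier_mat m k"
  shows "\<rho> (inv x) * (\<rho> x * X) = X" "\<rho> x * (\<rho> (inv x) * X) = X"
proof -
  have c: "\<rho> x \<in> carrier_mat m m" "\<rho> (inv x) \<in> carrier_mat m m" using rep_carrier[OF rep] x by auto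
  have "\<rho> (inv x) * (\<rho> x * X) = (\<rho> (inv x) * \<rho> x) * X" using assoc_mult_mat[OF c(2) c(1) X] by simp
  thus "\<rho> (inv x) * (\<rho> x * X) = X" using rep_inv(1)[OF rep grp x] X by simp
  have "\<rho> x * (\<rho> (inv x) * X) = (\<rho> x * \<rho> (inv x)) * X" using assoc_mult_mat[OF c(1) c(2) X] by simp
  thus "\<rho> x * (\<rho> (inv x) * X) = X" using rep_inv(2)[OF rep grp x] X by simp
qed

lemma conj_scalar: assumes rep: "is_rep G m \<rho>" and M: "M \<in> carrier_mat m m" and j: "j < n"
  and eq: "conjM \<rho> M j = c \<cdot>\<^sub>m 1\<^sub>m m"
  shows "M = c \<cdot>\<^sub>m 1\<^sub>m m"
proof -
  define r where "r = rep j"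
  have r: "r \<in> carrier G" unfolding r_def using rep_prop j by auto
  have c: "\<rho> r \<in> carrier_mat m m" "\<rho> (inv r) \<in> carrier_mat m m" using rep_carrier[OF rep] r by auto
  have Mr: "M * \<rho> (inv r) \<in> carrier_mat m m" using M c by simp
  have "conjM \<rho> M j = \<rho> r * (M * \<rho> (inv r))" unfolding conjM_def r_def[symmetric]
    using assoc_mult_mat[OF c(1) M c(2)] by simp
  hence "\<rho> (inv r) * conjM \<rho> M j = M * \<rho> (inv r)" using rep_cancel(1)[OF rep r Mr] by simp
  moreover have "\<rho> (inv r) * (c \<cdot>\<^sub>m 1\<^sub>m m) = c \<cdot>\<^sub>m \<rho> (inv r)"
    using mult_smult_distrib[OF c(2) one_carrier_mat, of c] c(2) by simp
  ultimately have 1: "M * \<rho> (inv r) = c \<cdot>\<^sub>m \<rho> (inv r)" using eq by simp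
  have "M = M * (\<rho> (inv r) * \<rho> r)" using rep_inv(1)[OF rep grp r] M by simp
  also have "\<dots> = (M * \<rho> (inv r)) * \<rho> r" using assoc_mult_mat[OF M c(2) c(1)] by simp
  also have "\<dots> = c \<cdot>\<^sub>m (\<rho> (inv r) * \<rho> r)" unfolding 1 using c by (simp add: mult_smult_assoc_mat)
  also have "\<dots> = c \<cdot>\<^sub>m 1\<^sub>m m" using rep_inv(1)[OF rep grp r] by simp
  finally show ?thesis .
qed

lemma conj_const_scalar:
  fixes \<rho> :: "'g \<Rightarrow> 'f::alg_closed_field mat"
  assumes irr: "irreducible_rep G m \<rho>" and M: "M \<in> End_rep P m \<rho>"
    and const: "\<And>k. k < n \<Longrightarrow> conjM \<rho> M k = conjM \<rho> M 0"
  shows "\<exists>c. M = c \<cdot>\<^sub>m 1\<^sub>m m"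
proof -
  have rep: "is_rep G m \<rho>" using irr unfolding irreducible_rep_def by auto
  have Mc: "M \<in> carrier_mat m m" using M unfolding End_rep_def by auto
  have "\<exists>c. conjM \<rho> M 0 = c \<cdot>\<^sub>m 1\<^sub>m m"
  proof (rule schur[OF irr])
    show "conjM \<rho> M 0 \<in> carrier_mat m m" using conjM_carrier[OF rep Mc n_pos] .
    fix g assume g: "g \<in> carrier G"
    have "\<rho> g * conjM \<rho> M 0 = conjM \<rho> M (act g 0) * \<rho> g" using conj_comm[OF rep M g n_pos] .
    also have "conjM \<rho> M (act g 0) = conjM \<rho> M 0" using const act_prop(1)[OF g n_pos] by blast
    finally show "conjM \<rho> M 0 * \<rho> g = \<rho> g * conjM \<rho> M 0" by simp
  qed
  then obtain c where "conjM \<rho> M 0 = c \<cdot>\<^sub>m 1\<^sub>m m" by blast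
  thus ?thesis using conj_scalar[OF rep Mc n_pos] by blast
qed

end

locale main = setting G P for G :: "'g monoid" (structure) and P :: "'g set" +
  fixes \<rho>U \<rho>V :: "'g \<Rightarrow> 'f::alg_closed_field mat" and nU nV :: nat and M N :: "'f mat"
  assumes irrU: "irreducible_rep G nU \<rho>U" and irrV: "irreducible_rep G nV \<rho>V"
    and irrX: "irreducible_rep G (nU*nV) (tensor_rep \<rho>U \<rho>V)"
    and MU: "M \<in> End_rep P nU \<rho>U" and NV: "N \<in> End_rep P nV \<rho>V"
    and Mns: "\<And>c. M \<noteq> c \<cdot>\<^sub>m 1\<^sub>m nU" and Nns: "\<And>c. N \<noteq> c \<cdot>\<^sub>m 1\<^sub>m nV"
begin
interpretation group G by (rule grp)

lemma repU: "is_rep G nU \<rho>U" and repV: "is_rep G nV \<rho>V" and nU: "0 < nU" and nV: "0 < nV"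
  using irrU irrV unfolding irreducible_rep_def by auto

lemma Mc: "M \<in> carrier_mat nU nU" and Nc: "N \<in> carrier_mat nV nV"
  using MU NV unfolding End_rep_def by auto

abbreviation "MM \<equiv> conjM \<rho>U M"
abbreviation "NN \<equiv> conjM \<rho>V N"

lemma MMc: "k < n \<Longrightarrow> MM k \<in> carrier_mat nU nU" using conjM_carrier[OF repU Mc] .
lemma NNc: "k < n \<Longrightarrow> NN k \<in> carrier_mat nV nV" using conjM_carrier[OF repV Nc] .

definition Phi :: "'f mat" where
  "Phi = lc (nU*nV) (nU*nV) {..<n} (\<lambda>_. 1) (\<lambda>k. kron (MM k) (NN k))"

lemma Phi_comm: assumes g: "g \<in> carrier G"
  shows "Phi * tensor_rep \<rho>U \<rho>V g = tensor_rep \<rho>U \<rho>V g * Phi"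
proof -
  have U: "\<rho>U g \<in> carrier_mat nU nU" and V: "\<rho>V g \<in> carrier_mat nV nV"
    using rep_carrier[OF repU g] rep_carrier[OF repV g] .
  have T: "tensor_rep \<rho>U \<rho>V g \<in> carrier_mat (nU*nV) (nU*nV)" unfolding tensor_rep_def using U V by simp
  have Yc: "\<And>k. k \<in> {..<n} \<Longrightarrow> kron (MM k) (NN k) \<in> carrier_mat (nU*nV) (nU*nV)"
    using MMc NNc by simp
  have "Phi * tensor_rep \<rho>U \<rho>V g = lc (nU*nV) (nU*nV) {..<n} (\<lambda>_. 1) (\<lambda>k. kron (MM k) (NN k) * tensor_rep \<rho>U \<rho>V g)"
    unfolding Phi_def by (rule lc_mult[OF T Yc])
  also have "\<dots> = lc (nU*nV) (nU*nV) {..<n} (\<lambda>_. 1) (\<lambda>k. kron (MM k * \<rho>U g) (NN k * \<rho>V g))"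
    by (rule lc_cong) (simp add: tensor_rep_def kron_mult[OF MMc NNc U V])
  finally have 1: "Phi * tensor_rep \<rho>U \<rho>V g = lc (nU*nV) (nU*nV) {..<n} (\<lambda>_. 1) (\<lambda>k. kron (MM k * \<rho>U g) (NN k * \<rho>V g))" .
  have "tensor_rep \<rho>U \<rho>V g * Phi = lc (nU*nV) (nU*nV) {..<n} (\<lambda>_. 1) (\<lambda>k. tensor_rep \<rho>U \<rho>V g * kron (MM k) (NN k))"
    unfolding Phi_def by (rule mult_lc[OF T Yc])
  also have "\<dots> = lc (nU*nV) (nU*nV) {..<n} (\<lambda>_. 1) (\<lambda>k. kron (MM (act g k) * \<rho>U g) (NN (act g k) * \<rho>V g))"
  proof (rule lc_cong)
    fix k assume k: "k \<in> {..<n}"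
    hence k': "k < n" by simp
    have "tensor_rep \<rho>U \<rho>V g * kron (MM k) (NN k) = kron (\<rho>U g * MM k) (\<rho>V g * NN k)"
      unfolding tensor_rep_def by (rule kron_mult[OF U V MMc[OF k'] NNc[OF k']])
    also have "\<dots> = kron (MM (act g k) * \<rho>U g) (NN (act g k) * \<rho>V g)"
      using conj_comm[OF repU MU g k'] conj_comm[OF repV NV g k'] by simp
    finally show "tensor_rep \<rho>U \<rho>V g * kron (MM k) (NN k) = kron (MM (act g k) * \<rho>U g) (NN (act g k) * \<rho>V g)" .
  qed
  also have "\<dots> = lc (nU*nV) (nU*nV) {..<n} (\<lambda>_. 1) (\<lambda>k. kron (MM k * \<rho>U g) (NN k * \<rho>V g))"
    using lc_reindex[OF act_bij[OF g], of "nU*nV" "nU*nV" "\<lambda>k. kron (MM k * \<rho>U g) (NN k * \<rho>V g)"] by simp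
  finally show ?thesis using 1 by simp
qed

lemma Phi_scalar: "\<exists>c. Phi = c \<cdot>\<^sub>m 1\<^sub>m (nU*nV)"
proof (rule schur[OF irrX])
  show "Phi \<in> carrier_mat (nU*nV) (nU*nV)" by (simp add: Phi_def)
  fix g assume "g \<in> carrier G" thus "Phi * tensor_rep \<rho>U \<rho>V g = tensor_rep \<rho>U \<rho>V g * Phi" by (rule Phi_comm)
qed

definition comb :: "'f vec \<Rightarrow> 'f mat" where "comb f = lc nU nU {..<n} (\<lambda>k. f $ k) MM"

lemma comb_index: "a < nU \<Longrightarrow> b < nU \<Longrightarrow> comb f $$ (a,b) = (\<Sum>k<n. f $ k * MM k $$ (a,b))"
  unfolding comb_def by (simp add: lc_index)

lemma comb_carrier[simp]: "comb f \<in> carrier_mat nU nU" unfolding comb_def by simp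
lemma comb_dims[simp]: "dim_row (comb f) = nU" "dim_col (comb f) = nU" unfolding comb_def by simp_all

lemma comb_add: assumes "u \<in> carrier_vec n" "v \<in> carrier_vec n" shows "comb (u + v) = comb u + comb v"
proof (rule eq_matI)
  fix a b assume "a < dim_row (comb u + comb v)" "b < dim_col (comb u + comb v)"
  hence a: "a < nU" and b: "b < nU" by auto
  have "comb (u + v) $$ (a,b) = (\<Sum>k<n. u $ k * MM k $$ (a,b) + v $ k * MM k $$ (a,b))"
    unfolding comb_index[OF a b] using assms by (intro sum.cong refl) (auto simp: distrib_right)
  thus "comb (u + v) $$ (a,b) = (comb u + comb v) $$ (a,b)" using a b by (simp add: comb_index sum.distrib)
qed auto

lemma comb_smult: "comb (c \<cdot>\<^sub>v v) = c \<cdot>\<^sub>m comb v" if "v \<in> carrier_vec n" for v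
proof (rule eq_matI)
  fix a b assume "a < dim_row (c \<cdot>\<^sub>m comb v)" "b < dim_col (c \<cdot>\<^sub>m comb v)"
  hence a: "a < nU" and b: "b < nU" by auto
  have "comb (c \<cdot>\<^sub>v v) $$ (a,b) = (\<Sum>k<n. c * (v $ k * MM k $$ (a,b)))"
    unfolding comb_index[OF a b] using that by (intro sum.cong refl) auto
  thus "comb (c \<cdot>\<^sub>v v) $$ (a,b) = (c \<cdot>\<^sub>m comb v) $$ (a,b)" using a b by (simp add: comb_index sum_distrib_left)
qed auto

lemma comb_unit: assumes j: "j < n" shows "comb (unit_vec n j) = MM j"
proof (rule eq_matI)
  fix a b assume "a < dim_row (MM j)" "b < dim_col (MM j)"
  hence a: "a < nU" and b: "b < nU" using MMc[OF j] by auto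
  have "comb (unit_vec n j) $$ (a,b) = (\<Sum>k<n. if k = j then MM k $$ (a,b) else 0)"
    unfolding comb_index[OF a b] by (intro sum.cong refl) (auto simp: unit_vec_def)
  also have "\<dots> = MM j $$ (a,b)" using j by simp
  finally show "comb (unit_vec n j) $$ (a,b) = MM j $$ (a,b)" .
qed (use MMc[OF j] in auto)

lemma comb_equiv: assumes g: "g \<in> carrier G" and f: "f \<in> carrier_vec n"
  shows "comb (ind_triv_rep G P g *\<^sub>v f) = \<rho>U g * comb f * \<rho>U (inv g)"
proof -
  have U: "\<rho>U g \<in> carrier_mat nU nU" "\<rho>U (inv g) \<in> carrier_mat nU nU"
    using rep_carrier[OF repU] g by auto
  have "comb (ind_triv_rep G P g *\<^sub>v f) = lc nU nU {..<n} (\<lambda>k. f $ act (inv g) k) MM"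
    unfolding comb_def W_mult[OF g f] by (rule lc_cong2) auto
  also have "\<dots> = lc nU nU {..<n} (\<lambda>k. f $ act (inv g) (act g k)) (\<lambda>k. MM (act g k))"
    using lc_reindex2[OF act_bij[OF g], of nU nU "\<lambda>k. f $ act (inv g) k" MM] by simp
  also have "\<dots> = lc nU nU {..<n} (\<lambda>k. f $ k) (\<lambda>k. \<rho>U g * MM k * \<rho>U (inv g))"
    by (rule lc_cong2) (use act_inv(1)[OF g] conj_act[OF repU MU g] in auto)
  also have "\<dots> = \<rho>U g * comb f * \<rho>U (inv g)"
  proof -
    have "\<rho>U g * comb f = lc nU nU {..<n} (\<lambda>k. f $ k) (\<lambda>k. \<rho>U g * MM k)"
      unfolding comb_def by (rule mult_lc[OF U(1)]) (use MMc in auto)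
    also have "\<dots> * \<rho>U (inv g) = lc nU nU {..<n} (\<lambda>k. f $ k) (\<lambda>k. \<rho>U g * MM k * \<rho>U (inv g))"
      by (rule lc_mult[OF U(2)]) (use MMc U in auto)
    finally show ?thesis by simp
  qed
  finally show ?thesis .
qed

definition K :: "'f vec set" where "K = {f \<in> carrier_vec n. \<exists>c. comb f = c \<cdot>\<^sub>m 1\<^sub>m nU}"

lemma K_sub: "is_submodule (carrier G) n (ind_triv_rep G P) K"
  unfolding is_submodule_def is_subspace_def
proof (intro conjI ballI allI)
  show "K \<subseteq> carrier_vec n" unfolding K_def by auto
  have "comb (0\<^sub>v n) = 0 \<cdot>\<^sub>m 1\<^sub>m nU"
    by (rule eq_matI) (auto simp: comb_index)
  thus "0\<^sub>v n \<in> K" unfolding K_def by auto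
next
  fix u v assume u: "u \<in> K" and v: "v \<in> K"
  then obtain c d where c: "comb u = c \<cdot>\<^sub>m 1\<^sub>m nU" and d: "comb v = d \<cdot>\<^sub>m 1\<^sub>m nU"
    and uc: "u \<in> carrier_vec n" and vc: "v \<in> carrier_vec n" unfolding K_def by auto
  have "comb (u + v) = (c + d) \<cdot>\<^sub>m 1\<^sub>m nU" unfolding comb_add[OF uc vc] c d
    by (rule eq_matI) (auto simp: algebra_simps)
  thus "u + v \<in> K" unfolding K_def using uc vc by auto
next
  fix a v assume v: "v \<in> K"
  then obtain d where d: "comb v = d \<cdot>\<^sub>m 1\<^sub>m nU" and vc: "v \<in> carrier_vec n" unfolding K_def by auto
  have "comb (a \<cdot>\<^sub>v v) = (a * d) \<cdot>\<^sub>m 1\<^sub>m nU" unfolding comb_smult[OF vc] d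
    by (rule eq_matI) auto
  thus "a \<cdot>\<^sub>v v \<in> K" unfolding K_def using vc by auto
next
  fix g v assume g: "g \<in> carrier G" and v: "v \<in> K"
  then obtain d where d: "comb v = d \<cdot>\<^sub>m 1\<^sub>m nU" and vc: "v \<in> carrier_vec n" unfolding K_def by auto
  have U: "\<rho>U g \<in> carrier_mat nU nU" "\<rho>U (inv g) \<in> carrier_mat nU nU"
    using rep_carrier[OF repU] g by auto
  have "comb (ind_triv_rep G P g *\<^sub>v v) = \<rho>U g * (d \<cdot>\<^sub>m 1\<^sub>m nU) * \<rho>U (inv g)"
    using comb_equiv[OF g vc] d by simp
  also have "\<dots> = d \<cdot>\<^sub>m (\<rho>U g * \<rho>U (inv g))"
  proof -
    have "\<rho>U g * (d \<cdot>\<^sub>m 1\<^sub>m nU) = d \<cdot>\<^sub>m \<rho>U g"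
      using mult_smult_distrib[OF U(1) one_carrier_mat, of d] U(1) by simp
    thus ?thesis using mult_smult_assoc_mat[OF U(1) U(2), of d] by simp
  qed
  also have "\<dots> = d \<cdot>\<^sub>m 1\<^sub>m nU" using rep_inv(2)[OF repU grp g] by simp
  finally have "comb (ind_triv_rep G P g *\<^sub>v v) = d \<cdot>\<^sub>m 1\<^sub>m nU" .
  thus "ind_triv_rep G P g *\<^sub>v v \<in> K" unfolding K_def using mult_mat_vec_carrier[OF W_carrier vc] by auto
qed

end

context main begin
interpretation group G by (rule grp)

lemma ones_K: "ones n \<in> K"
proof -
  have "comb (ones n) = lc nU nU {..<n} (\<lambda>_. 1) MM"
    unfolding comb_def by (rule lc_cong2) (auto simp: ones_def)
  moreover have "\<exists>c. lc nU nU {..<n} (\<lambda>_. 1) MM = c \<cdot>\<^sub>m 1\<^sub>m nU"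
  proof (rule schur[OF irrU])
    show "lc nU nU {..<n} (\<lambda>_. 1) MM \<in> carrier_mat nU nU" by simp
    fix g assume g: "g \<in> carrier G"
    have U: "\<rho>U g \<in> carrier_mat nU nU" using rep_carrier[OF repU g] .
    have "\<rho>U g * lc nU nU {..<n} (\<lambda>_. 1) MM = lc nU nU {..<n} (\<lambda>_. 1) (\<lambda>k. \<rho>U g * MM k)"
      by (rule mult_lc[OF U]) (use MMc in auto)
    also have "\<dots> = lc nU nU {..<n} (\<lambda>_. 1) (\<lambda>k. MM (act g k) * \<rho>U g)"
      by (rule lc_cong) (use conj_comm[OF repU MU g] in auto)
    also have "\<dots> = lc nU nU {..<n} (\<lambda>_. 1) (\<lambda>k. MM k * \<rho>U g)"
      using lc_reindex[OF act_bij[OF g], of nU nU "\<lambda>k. MM k * \<rho>U g"] by simp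
    also have "\<dots> = lc nU nU {..<n} (\<lambda>_. 1) MM * \<rho>U g"
      by (rule lc_mult[OF U, symmetric]) (use MMc in auto)
    finally show "lc nU nU {..<n} (\<lambda>_. 1) MM * \<rho>U g = \<rho>U g * lc nU nU {..<n} (\<lambda>_. 1) MM" by simp
  qed
  ultimately show ?thesis unfolding K_def by auto
qed

lemma unit0_notK: "unit_vec n 0 \<notin> K"
proof
  assume "unit_vec n 0 \<in> K"
  then obtain c where "comb (unit_vec n 0) = c \<cdot>\<^sub>m 1\<^sub>m nU" unfolding K_def by auto
  hence "MM 0 = c \<cdot>\<^sub>m 1\<^sub>m nU" using comb_unit[OF n_pos] by simp
  hence "M = c \<cdot>\<^sub>m 1\<^sub>m nU" using conj_scalar[OF repU Mc n_pos] by blast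
  thus False using Mns by blast
qed

lemma nonconst: "\<exists>f i j. f \<in> K \<and> i < n \<and> j < n \<and> f $ i \<noteq> f $ j"
proof -
  have "\<exists>a b k. a < nV \<and> b < nV \<and> k < n \<and> NN k $$ (a,b) \<noteq> NN 0 $$ (a,b)"
  proof (rule ccontr)
    assume "\<not> ?thesis"
    hence H: "\<And>a b k. a < nV \<Longrightarrow> b < nV \<Longrightarrow> k < n \<Longrightarrow> NN k $$ (a,b) = NN 0 $$ (a,b)" by blast
    have "\<And>k. k < n \<Longrightarrow> NN k = NN 0"
    proof -
      fix k assume k: "k < n"
      show "NN k = NN 0" by (rule eq_matI) (use H[OF _ _ k] NNc[OF k] NNc[OF n_pos] in auto)
    qed
    then obtain c where "N = c \<cdot>\<^sub>m 1\<^sub>m nV" using conj_const_scalar[OF irrV NV] by blast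
    thus False using Nns by blast
  qed
  then obtain a b k where ab: "a < nV" "b < nV" and k: "k < n" and ne: "NN k $$ (a,b) \<noteq> NN 0 $$ (a,b)" by blast
  define f where "f = vec n (\<lambda>k. NN k $$ (a,b))"
  obtain c where c: "Phi = c \<cdot>\<^sub>m 1\<^sub>m (nU*nV)" using Phi_scalar by blast
  have "comb f = (c * (if a = b then 1 else 0)) \<cdot>\<^sub>m 1\<^sub>m nU"
  proof (rule eq_matI)
    fix x y assume "x < dim_row ((c * (if a = b then 1 else 0)) \<cdot>\<^sub>m 1\<^sub>m nU)"
      "y < dim_col ((c * (if a = b then 1 else 0)) \<cdot>\<^sub>m 1\<^sub>m nU)"
    hence x: "x < nU" and y: "y < nU" by auto
    have r: "x*nV+a < nU*nV" "(x*nV+a) div nV = x" "(x*nV+a) mod nV = a" using divmod_lt[OF x ab(1)] by auto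
    have s: "y*nV+b < nU*nV" "(y*nV+b) div nV = y" "(y*nV+b) mod nV = b" using divmod_lt[OF y ab(2)] by auto
    have eqiff: "(x*nV+a = y*nV+b) = (x = y \<and> a = b)" using r s by metis
    have "comb f $$ (x,y) = (\<Sum>k<n. NN k $$ (a,b) * MM k $$ (x,y))"
      unfolding comb_index[OF x y] f_def by (intro sum.cong refl) auto
    also have "\<dots> = (\<Sum>k<n. 1 * kron (MM k) (NN k) $$ (x*nV+a, y*nV+b))"
      by (intro sum.cong refl) (use kron_index[OF MMc NNc x ab(1) y ab(2)] in auto)
    also have "\<dots> = Phi $$ (x*nV+a, y*nV+b)" unfolding Phi_def using r s by (simp add: lc_index)
    also have "\<dots> = c * (if x*nV+a = y*nV+b then 1 else 0)" unfolding c using r s by simp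
    also have "\<dots> = ((c * (if a = b then 1 else 0)) \<cdot>\<^sub>m 1\<^sub>m nU) $$ (x,y)" unfolding eqiff using x y by auto
    finally show "comb f $$ (x,y) = ((c * (if a = b then 1 else 0)) \<cdot>\<^sub>m 1\<^sub>m nU) $$ (x,y)" .
  qed auto
  hence "f \<in> K" unfolding K_def f_def by auto
  moreover have "f $ k \<noteq> f $ 0" unfolding f_def using k n_pos ne by simp
  ultimately show ?thesis using k n_pos by blast
qed

end

context main begin
interpretation group G by (rule grp)

lemma conj_scal: assumes g: "g \<in> carrier G" shows "\<rho>U g * (c \<cdot>\<^sub>m 1\<^sub>m nU) * \<rho>U (inv g) = c \<cdot>\<^sub>m 1\<^sub>m nU"
proof -
  have U: "\<rho>U g \<in> carrier_mat nU nU" "\<rho>U (inv g) \<in> carrier_mat nU nU"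
    using rep_carrier[OF repU] g by auto
  have "\<rho>U g * (c \<cdot>\<^sub>m 1\<^sub>m nU) = c \<cdot>\<^sub>m \<rho>U g"
    using mult_smult_distrib[OF U(1) one_carrier_mat, of c] U(1) by simp
  hence "\<rho>U g * (c \<cdot>\<^sub>m 1\<^sub>m nU) * \<rho>U (inv g) = c \<cdot>\<^sub>m (\<rho>U g * \<rho>U (inv g))"
    using mult_smult_assoc_mat[OF U(1) U(2), of c] by simp
  thus ?thesis using rep_inv(2)[OF repU grp g] by simp
qed

lemma comb_diff: assumes k: "k < n" and l: "l < n"
  shows "comb (unit_vec n k + (-1) \<cdot>\<^sub>v unit_vec n l) = MM k + (-1) \<cdot>\<^sub>m MM l"
  using comb_add[of "unit_vec n k" "(-1) \<cdot>\<^sub>v unit_vec n l"] comb_smult[of "unit_vec n l" "-1"]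
    comb_unit[OF k] comb_unit[OF l] by simp

lemma comb_diff00: assumes k: "k < n" and l: "l < n"
  shows "comb (unit_vec n k + (-1) \<cdot>\<^sub>v unit_vec n l) $$ (0,0) = MM k $$ (0,0) - MM l $$ (0,0)"
  unfolding comb_diff[OF k l] using MMc[OF k] MMc[OF l] nU by simp

lemma uniserial_false:
  fixes \<alpha> :: "'g \<Rightarrow> 'f mat"
  assumes us: "uniserial_1A1 G n (ind_triv_rep G P) dA \<alpha>" and irr: "irreducible_rep G dA \<alpha>"
    and niso: "\<not> rep_iso G dA \<alpha> 1 triv_rep"
  shows False
proof -
  obtain f i j where f: "f \<in> K" "i < n" "j < n" "f $ i \<noteq> f $ j" using nonconst by blast
  have W0K: "{v \<in> carrier_vec n. (\<Sum>i<n. v $ i) = 0} \<subseteq> K" using uniserial_case[OF us irr K_sub f] .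
  have diffK: "unit_vec n k + (-1) \<cdot>\<^sub>v unit_vec n 0 \<in> K" if k: "k < n" for k
  proof -
    have "(\<Sum>i<n. (unit_vec n k + (-1) \<cdot>\<^sub>v unit_vec n 0 :: 'f vec) $ i) = (\<Sum>i<n. (if i = k then 1 else 0) - (if i = 0 then 1 else 0))"
      by (intro sum.cong refl) (auto simp: unit_vec_def)
    also have "\<dots> = 0" using k n_pos by (simp add: sum_subtractf)
    finally show ?thesis using W0K by auto
  qed
  define d where "d k = MM k $$ (0,0) - MM 0 $$ (0,0)" for k
  have d0: "d 0 = 0" unfolding d_def by simp
  have dprop: "MM k $$ (a,b) = MM 0 $$ (a,b) + (if a = b then d k else 0)" if k: "k < n" and a: "a < nU" and b: "b < nU" for k a b
  proof -
    obtain c where c: "comb (unit_vec n k + (-1) \<cdot>\<^sub>v unit_vec n 0) = c \<cdot>\<^sub>m 1\<^sub>m nU" using diffK[OF k] unfolding K_def by auto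
    have "c = d k" using comb_diff00[OF k n_pos] c nU unfolding d_def by simp
    have "comb (unit_vec n k + (-1) \<cdot>\<^sub>v unit_vec n 0) $$ (a,b) = MM k $$ (a,b) - MM 0 $$ (a,b)"
      unfolding comb_diff[OF k n_pos] using MMc[OF k] MMc[OF n_pos] a b by simp
    thus ?thesis using c \<open>c = d k\<close> a b by auto
  qed
  have drel: "d (act h k) = d (act h 0) + d k" if h: "h \<in> carrier G" and k: "k < n" for h k
  proof -
    define x :: "'f vec" where "x = unit_vec n k + (-1) \<cdot>\<^sub>v unit_vec n 0"
    have xc: "x \<in> carrier_vec n" unfolding x_def by simp
    obtain c where c: "comb x = c \<cdot>\<^sub>m 1\<^sub>m nU" using diffK[OF k] unfolding K_def x_def by auto
    have cd: "c = d k" using comb_diff00[OF k n_pos] c nU unfolding d_def x_def by simp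
    have "comb (ind_triv_rep G P h *\<^sub>v x) = c \<cdot>\<^sub>m 1\<^sub>m nU" using comb_equiv[OF h xc] c conj_scal[OF h] by simp
    moreover have "ind_triv_rep G P h *\<^sub>v x = unit_vec n (act h k) + (-1) \<cdot>\<^sub>v unit_vec n (act h 0)"
    proof -
      have "ind_triv_rep G P h *\<^sub>v x = ind_triv_rep G P h *\<^sub>v unit_vec n k + ind_triv_rep G P h *\<^sub>v ((-1) \<cdot>\<^sub>v unit_vec n 0)"
        unfolding x_def by (rule mult_add_distrib_mat_vec[OF W_carrier]) auto
      also have "ind_triv_rep G P h *\<^sub>v ((-1) \<cdot>\<^sub>v unit_vec n 0) = (-1) \<cdot>\<^sub>v (ind_triv_rep G P h *\<^sub>v unit_vec n 0)"
        by (rule mult_mat_vec[OF W_carrier]) auto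
      finally show ?thesis by (simp add: W_unit[OF h k] W_unit[OF h n_pos])
    qed
    ultimately have "comb (unit_vec n (act h k) + (-1) \<cdot>\<^sub>v unit_vec n (act h 0)) $$ (0,0) = c"
      using nU by simp
    hence "MM (act h k) $$ (0,0) - MM (act h 0) $$ (0,0) = c"
      using comb_diff00[OF act_prop(1)[OF h k] act_prop(1)[OF h n_pos]] by simp
    thus ?thesis unfolding cd d_def by (simp add: algebra_simps)
  qed
  define fv :: "'f vec" where "fv = vec n d"
  have fvc: "fv \<in> carrier_vec n" unfolding fv_def by simp
  obtain i0 where i0: "i0 < n" "d i0 \<noteq> 0"
  proof (rule ccontr)
    assume "\<not> thesis"
    hence dz: "\<And>k. k < n \<Longrightarrow> d k = 0" using that by blast
    have "\<And>k. k < n \<Longrightarrow> MM k = MM 0"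
    proof -
      fix k assume k: "k < n"
      show "MM k = MM 0"
        by (rule eq_matI) (use dprop[OF k] dz[OF k] MMc[OF k] MMc[OF n_pos] in auto)
    qed
    then obtain c where "M = c \<cdot>\<^sub>m 1\<^sub>m nU" using conj_const_scalar[OF irrU MU] by blast
    thus False using Mns by blast
  qed
  have Wfv: "ind_triv_rep G P g *\<^sub>v (a \<cdot>\<^sub>v ones n + b \<cdot>\<^sub>v fv) = (a + b * d (act (inv g) 0)) \<cdot>\<^sub>v ones n + b \<cdot>\<^sub>v fv"
    if g: "g \<in> carrier G" for g a b
  proof -
    have xc: "a \<cdot>\<^sub>v ones n + b \<cdot>\<^sub>v fv \<in> carrier_vec n" using fvc by simp
    show ?thesis unfolding W_mult[OF g xc]
    proof (rule eq_vecI)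
      fix i assume "i < dim_vec ((a + b * d (act (inv g) 0)) \<cdot>\<^sub>v ones n + b \<cdot>\<^sub>v fv)"
      hence i: "i < n" using fvc by simp
      have ai: "act (inv g) i < n" using act_prop(1)[of "inv g" i] g i by simp
      show "vec n (\<lambda>i. (a \<cdot>\<^sub>v ones n + b \<cdot>\<^sub>v fv) $ act (inv g) i) $ i = ((a + b * d (act (inv g) 0)) \<cdot>\<^sub>v ones n + b \<cdot>\<^sub>v fv) $ i"
        using i ai fvc drel[of "inv g" i] g by (simp add: ones_def fv_def algebra_simps)
    qed (use fvc in simp)
  qed
  define S :: "'f vec set" where "S = {x. \<exists>a b. x = a \<cdot>\<^sub>v ones n + b \<cdot>\<^sub>v fv}"
  have Sc: "S \<subseteq> carrier_vec n" unfolding S_def using fvc by auto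
  have fvS: "fv \<in> S" unfolding S_def
    by (rule CollectI, rule exI[of _ 0], rule exI[of _ 1]) (use fvc in \<open>intro eq_vecI, auto simp: ones_def\<close>)
  have S_sub: "is_submodule (carrier G) n (ind_triv_rep G P) S"
    unfolding is_submodule_def is_subspace_def
  proof (intro conjI ballI allI)
    show "S \<subseteq> carrier_vec n" by (rule Sc)
    show "0\<^sub>v n \<in> S" unfolding S_def
      by (rule CollectI, rule exI[of _ 0], rule exI[of _ 0]) (use fvc in \<open>intro eq_vecI, auto simp: ones_def\<close>)
  next
    fix u v assume "u \<in> S" "v \<in> S"
    then obtain a b a' b' where u: "u = a \<cdot>\<^sub>v ones n + b \<cdot>\<^sub>v fv" and v: "v = a' \<cdot>\<^sub>v ones n + b' \<cdot>\<^sub>v fv"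
      unfolding S_def by auto
    have "u + v = (a + a') \<cdot>\<^sub>v ones n + (b + b') \<cdot>\<^sub>v fv" unfolding u v
      using fvc by (intro eq_vecI) (auto simp: ones_def algebra_simps)
    thus "u + v \<in> S" unfolding S_def by blast
  next
    fix c v assume "v \<in> S"
    then obtain a b where v: "v = a \<cdot>\<^sub>v ones n + b \<cdot>\<^sub>v fv" unfolding S_def by auto
    have "c \<cdot>\<^sub>v v = (c * a) \<cdot>\<^sub>v ones n + (c * b) \<cdot>\<^sub>v fv" unfolding v
      using fvc by (intro eq_vecI) (auto simp: ones_def algebra_simps)
    thus "c \<cdot>\<^sub>v v \<in> S" unfolding S_def by blast
  next
    fix g v assume g: "g \<in> carrier G" and "v \<in> S"
    then obtain a b where v: "v = a \<cdot>\<^sub>v ones n + b \<cdot>\<^sub>v fv" unfolding S_def by auto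
    show "ind_triv_rep G P g *\<^sub>v v \<in> S" unfolding v Wfv[OF g] S_def by blast
  qed
  have sumS: "(\<Sum>i<n. (a \<cdot>\<^sub>v ones n + b \<cdot>\<^sub>v fv) $ i) = a * (\<Sum>i<n. (ones n :: 'f vec) $ i) + b * (\<Sum>i<n. fv $ i)" for a b
  proof -
    have "(\<Sum>i<n. (a \<cdot>\<^sub>v ones n + b \<cdot>\<^sub>v fv) $ i) = (\<Sum>i<n. a * (ones n :: 'f vec) $ i + b * fv $ i)"
      using fvc by (intro sum.cong refl) (auto simp: ones_def)
    thus ?thesis by (simp add: sum.distrib sum_distrib_left)
  qed
  have ch: "uniserial G n (ind_triv_rep G P :: 'g \<Rightarrow> 'f mat)" using us unfolding uniserial_1A1_def by (rule conjunct1)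
  obtain W1 W2 where r: "is_submodule (carrier G) n (ind_triv_rep G P) W1 \<and> is_submodule (carrier G) n (ind_triv_rep G P) W2 \<and> W1 \<subseteq> W2 \<and>
        subquot_iso G n (ind_triv_rep G P) {0\<^sub>v n} W1 1 triv_rep \<and>
        subquot_iso G n (ind_triv_rep G P) W1 W2 dA \<alpha> \<and>
        subquot_iso G n (ind_triv_rep G P) W2 (carrier_vec n) 1 triv_rep"
    using us[unfolded uniserial_1A1_def, THEN conjunct2] by (elim exE)
  note W1 = r[THEN conjunct1] and W2 = r[THEN conjunct2, THEN conjunct1]
    and W12 = r[THEN conjunct2, THEN conjunct2, THEN conjunct1]
    and iso1 = r[THEN conjunct2, THEN conjunct2, THEN conjunct2, THEN conjunct1]
    and iso2 = r[THEN conjunct2, THEN conjunct2, THEN conjunct2, THEN conjunct2, THEN conjunct1]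
    and iso3 = r[THEN conjunct2, THEN conjunct2, THEN conjunct2, THEN conjunct2, THEN conjunct2]
  have W2eq: "W2 = {v \<in> carrier_vec n. (\<Sum>i<n. v $ i) = 0}" using top_W0[OF iso3] .
  have onesW1: "ones n \<in> W1" using ones_in[OF W1 iso1] .
  have ss1: "is_subspace n W1" and ss2: "is_subspace n W2" using W1 W2 unfolding is_submodule_def by auto
  have cmp: "\<And>S T :: 'f vec set. is_submodule (carrier G) n (ind_triv_rep G P) S \<Longrightarrow> is_submodule (carrier G) n (ind_triv_rep G P) T \<Longrightarrow> S \<subseteq> T \<or> T \<subseteq> S"
    using ch unfolding uniserial_def by blast
  have fv_notW1: "fv \<notin> W1"
  proof
    assume "fv \<in> W1"
    from triv_const[OF W1 iso1 this i0(1) n_pos] have "fv $ i0 = fv $ 0" .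
    thus False using i0 d0 n_pos unfolding fv_def by simp
  qed
  have dApos: "0 < dA" using irr unfolding irreducible_rep_def by auto
  obtain Q where Q: "Q \<in> carrier_mat dA n" and surj: "(\<lambda>v. Q *\<^sub>v v) ` W2 = carrier_vec dA"
    and ker: "{v\<in>W2. Q *\<^sub>v v = 0\<^sub>v dA} = W1"
    and eqv: "\<And>g v. g \<in> carrier G \<Longrightarrow> v \<in> W2 \<Longrightarrow> Q *\<^sub>v (ind_triv_rep G P g *\<^sub>v v) = \<alpha> g *\<^sub>v (Q *\<^sub>v v)"
    using subquot_isoD[OF iso2] by blast
  have Qones: "Q *\<^sub>v ones n = 0\<^sub>v dA"
  proof -
    have "ones n \<in> {v\<in>W2. Q *\<^sub>v v = 0\<^sub>v dA}" unfolding ker by (rule onesW1)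
    thus ?thesis by simp
  qed
  have QS: "Q *\<^sub>v (a \<cdot>\<^sub>v ones n + b \<cdot>\<^sub>v fv) = b \<cdot>\<^sub>v (Q *\<^sub>v fv)" for a b
  proof -
    have "Q *\<^sub>v (a \<cdot>\<^sub>v ones n + b \<cdot>\<^sub>v fv) = a \<cdot>\<^sub>v 0\<^sub>v dA + b \<cdot>\<^sub>v (Q *\<^sub>v fv)"
      using Q fvc Qones by (simp add: mult_add_distrib_mat_vec mult_mat_vec)
    also have "\<dots> = b \<cdot>\<^sub>v (Q *\<^sub>v fv)" using Q fvc by (intro eq_vecI) auto
    finally show ?thesis .
  qed
  have u0: "(unit_vec dA 0 :: 'f vec) \<noteq> 0\<^sub>v dA"
  proof
    assume "(unit_vec dA 0 :: 'f vec) = 0\<^sub>v dA"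
    hence "(unit_vec dA 0 :: 'f vec) $ 0 = (0\<^sub>v dA :: 'f vec) $ 0" by simp
    thus False using dApos by simp
  qed
  show False
  proof (cases "S \<subseteq> W2")
    case True
    have notSW1: "\<not> S \<subseteq> W1" using fvS fv_notW1 by blast
    hence W1S: "W1 \<subseteq> S" using cmp[OF S_sub W1] by blast
    have "S = W1 \<or> S = W2" by (rule transport[OF iso2 irr S_sub W2 W1S True])
    hence SW2: "S = W2" using notSW1 by blast
    define v0 where "v0 = Q *\<^sub>v fv"
    have v0c: "v0 \<in> carrier_vec dA" unfolding v0_def using Q fvc by simp
    have span: "\<exists>b. w = b \<cdot>\<^sub>v v0" if w: "w \<in> carrier_vec dA" for w
    proof -
      from w surj obtain x where x: "x \<in> W2" "w = Q *\<^sub>v x" by (metis imageE)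
      from x(1) SW2 obtain a b where "x = a \<cdot>\<^sub>v ones n + b \<cdot>\<^sub>v fv" unfolding S_def by auto
      thus ?thesis using x(2) QS unfolding v0_def by blast
    qed
    have fix0: "\<alpha> g *\<^sub>v v0 = v0" if g: "g \<in> carrier G" for g
    proof -
      have fvW2: "fv \<in> W2" using fvS SW2 by simp
      have "\<alpha> g *\<^sub>v v0 = Q *\<^sub>v (ind_triv_rep G P g *\<^sub>v fv)" unfolding v0_def using eqv[OF g fvW2] by simp
      also have "ind_triv_rep G P g *\<^sub>v fv = ind_triv_rep G P g *\<^sub>v (0 \<cdot>\<^sub>v ones n + 1 \<cdot>\<^sub>v fv)"
        using fvc by (intro arg_cong[where f="\<lambda>x. ind_triv_rep G P g *\<^sub>v x"] eq_vecI) (auto simp: ones_def)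
      also have "\<dots> = (0 + 1 * d (act (inv g) 0)) \<cdot>\<^sub>v ones n + 1 \<cdot>\<^sub>v fv" by (rule Wfv[OF g])
      also have "Q *\<^sub>v ((0 + 1 * d (act (inv g) 0)) \<cdot>\<^sub>v ones n + 1 \<cdot>\<^sub>v fv) = 1 \<cdot>\<^sub>v (Q *\<^sub>v fv)" by (rule QS)
      finally show ?thesis unfolding v0_def using fvc Q by simp
    qed
    obtain b0 where b0: "unit_vec dA 0 = b0 \<cdot>\<^sub>v v0" using span[of "unit_vec dA 0"] by auto
    have v00: "v0 $ 0 \<noteq> 0"
    proof
      assume "v0 $ 0 = 0"
      hence "unit_vec dA 0 $ 0 = (b0 \<cdot>\<^sub>v v0) $ 0" using b0 by simp
      thus False using \<open>v0 $ 0 = 0\<close> dApos v0c by simp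
    qed
    have dA1: "dA = 1"
    proof (rule ccontr)
      assume "dA \<noteq> 1"
      hence dA2: "1 < dA" using dApos by simp
      obtain b1 where b1: "unit_vec dA 1 = b1 \<cdot>\<^sub>v v0" using span[of "unit_vec dA 1"] by auto
      have "unit_vec dA 1 $ 0 = (b1 \<cdot>\<^sub>v v0) $ 0" using b1 by simp
      hence "b1 * v0 $ 0 = 0" using dA2 dApos v0c by simp
      hence "b1 = 0" using v00 by simp
      hence "unit_vec dA 1 $ 1 = (0 \<cdot>\<^sub>v v0) $ 1" using b1 by simp
      thus False using dA2 v0c by simp
    qed
    have alpha1: "\<alpha> g = 1\<^sub>m 1" if g: "g \<in> carrier G" for g
    proof -
      have ac: "\<alpha> g \<in> carrier_mat 1 1" using irr g dA1 unfolding irreducible_rep_def is_rep_def by auto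
      have "(\<alpha> g *\<^sub>v v0) $ 0 = v0 $ 0" using fix0[OF g] by simp
      hence "\<alpha> g $$ (0,0) * v0 $ 0 = v0 $ 0" using ac v0c dA1 by (simp add: scalar_prod_def)
      hence "\<alpha> g $$ (0,0) = 1" using v00 by simp
      thus ?thesis using ac by (intro eq_matI) auto
    qed
    have "rep_iso G dA \<alpha> 1 triv_rep"
      unfolding rep_iso_def subquot_iso_def dA1
    proof (intro bexI[of _ "1\<^sub>m 1"] conjI ballI)
      show "(\<lambda>v. 1\<^sub>m 1 *\<^sub>v v) ` carrier_vec 1 = (carrier_vec 1 :: 'f vec set)"
        by (auto simp: image_iff intro!: bexI)
      show "{v \<in> carrier_vec 1. 1\<^sub>m 1 *\<^sub>v v = 0\<^sub>v 1} = {0\<^sub>v 1 :: 'f vec}" by auto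
      fix g v assume g: "g \<in> carrier G" and v: "(v :: 'f vec) \<in> carrier_vec 1"
      show "1\<^sub>m 1 *\<^sub>v (\<alpha> g *\<^sub>v v) = triv_rep g *\<^sub>v (1\<^sub>m 1 *\<^sub>v v)"
        using alpha1[OF g] v by (simp add: triv_rep_def)
    qed simp
    thus False using niso by simp
  next
    case False
    hence W2S: "W2 \<subseteq> S" using cmp[OF S_sub W2] by blast
    have onesW2: "ones n \<in> W2" using onesW1 W12 by auto
    have sO: "(\<Sum>i<n. (ones n :: 'f vec) $ i) = 0" using onesW2 W2eq by simp
    have fv_notW2: "fv \<notin> W2"
    proof
      assume fvW2: "fv \<in> W2"
      have "S \<subseteq> W2"
      proof
        fix x assume "x \<in> S"
        then obtain a b where x: "x = a \<cdot>\<^sub>v ones n + b \<cdot>\<^sub>v fv" unfolding S_def by auto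
        show "x \<in> W2" unfolding x using subspace_add[OF ss2 subspace_smult[OF ss2 onesW2] subspace_smult[OF ss2 fvW2]] .
      qed
      thus False using False by simp
    qed
    have sF: "(\<Sum>i<n. fv $ i) \<noteq> 0" using fv_notW2 fvc W2eq by auto
    have "unit_vec dA 0 \<in> carrier_vec dA" by simp
    with surj obtain x where x: "x \<in> W2" "unit_vec dA 0 = Q *\<^sub>v x" by (metis imageE)
    from x(1) W2S obtain a b where xab: "x = a \<cdot>\<^sub>v ones n + b \<cdot>\<^sub>v fv" unfolding S_def by auto
    have "(\<Sum>i<n. x $ i) = 0" using x(1) W2eq by simp
    hence "b * (\<Sum>i<n. fv $ i) = 0" unfolding xab sumS sO by simp
    hence "b = 0" using sF by simp
    hence "Q *\<^sub>v x = 0\<^sub>v dA" unfolding xab QS using Q fvc by (auto intro!: eq_vecI)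
    thus False using x(2) u0 by simp
  qed
qed

end

lemma nonscalar_of_ge2:
  fixes \<rho> :: "'g \<Rightarrow> 'f::field mat"
  assumes "dim_End_ge2 H m \<rho>"
  shows "\<exists>M \<in> End_rep H m \<rho>. \<forall>c. M \<noteq> c \<cdot>\<^sub>m 1\<^sub>m m"
proof (rule ccontr)
  assume "\<not> ?thesis"
  hence sc: "\<And>M. M \<in> End_rep H m \<rho> \<Longrightarrow> \<exists>c. M = c \<cdot>\<^sub>m 1\<^sub>m m" by blast
  from assms obtain M1 M2 where M1: "M1 \<in> End_rep H m \<rho>" and M2: "M2 \<in> End_rep H m \<rho>"
    and ind: "\<And>a b. a \<cdot>\<^sub>m M1 + b \<cdot>\<^sub>m M2 = 0\<^sub>m m m \<Longrightarrow> a = 0 \<and> b = 0"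
    unfolding dim_End_ge2_def by blast
  obtain c1 where c1: "M1 = c1 \<cdot>\<^sub>m 1\<^sub>m m" using sc[OF M1] by blast
  obtain c2 where c2: "M2 = c2 \<cdot>\<^sub>m 1\<^sub>m m" using sc[OF M2] by blast
  show False
  proof (cases "c1 = 0 \<and> c2 = 0")
    case True
    have "1 \<cdot>\<^sub>m M1 + 0 \<cdot>\<^sub>m M2 = 0\<^sub>m m m" unfolding c1 c2 using True by (intro eq_matI) auto
    thus False using ind by fastforce
  next
    case False
    have "c2 \<cdot>\<^sub>m M1 + (- c1) \<cdot>\<^sub>m M2 = 0\<^sub>m m m" unfolding c1 c2 by (intro eq_matI) auto
    thus False using ind False by fastforce
  qed
qed

theorem lemma8p5:
  fixes G :: "'g monoid" and P :: "'g set"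
    and \<rho>U \<rho>V :: "'g \<Rightarrow> 'f::alg_closed_field mat" and nU nV :: nat
  assumes "group G" and "finite (carrier G)"
    and "subgroup P G" and "P \<noteq> carrier G"
    and "irreducible_rep G nU \<rho>U" and "irreducible_rep G nV \<rho>V"
    and "dim_End_ge2 P nU \<rho>U" and "dim_End_ge2 P nV \<rho>V"
    and "\<exists>a (\<alpha> :: 'g \<Rightarrow> 'f mat). irreducible_rep G a \<alpha> \<and> \<not> rep_iso G a \<alpha> 1 triv_rep \<and>
           (is_triv_plus G (ind_dim G P) (ind_triv_rep G P) a \<alpha> \<or>
            uniserial_1A1 G (ind_dim G P) (ind_triv_rep G P) a \<alpha>)"
  shows "\<not> irreducible_rep G (nU * nV) (tensor_rep \<rho>U \<rho>V)"
proof
  assume irrX: "irreducible_rep G (nU * nV) (tensor_rep \<rho>U \<rho>V)"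
  obtain M where M: "M \<in> End_rep P nU \<rho>U" and Mns: "\<forall>c. M \<noteq> c \<cdot>\<^sub>m 1\<^sub>m nU"
    using nonscalar_of_ge2[OF assms(7)] by blast
  obtain N where N: "N \<in> End_rep P nV \<rho>V" and Nns: "\<forall>c. N \<noteq> c \<cdot>\<^sub>m 1\<^sub>m nV"
    using nonscalar_of_ge2[OF assms(8)] by blast
  obtain a and \<alpha> :: "'g \<Rightarrow> 'f mat" where irr: "irreducible_rep G a \<alpha>" and niso: "\<not> rep_iso G a \<alpha> 1 triv_rep"
    and cases: "is_triv_plus G (ind_dim G P) (ind_triv_rep G P) a \<alpha> \<or> uniserial_1A1 G (ind_dim G P) (ind_triv_rep G P) a \<alpha>"
    using assms(9) by blast
  have s: "setting G P" unfolding setting_def using assms(1-3) by auto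
  interpret main G P \<rho>U \<rho>V nU nV M N
    by (rule main.intro[OF s], unfold main_axioms_def) (use assms(5,6) irrX M N Mns Nns in auto)
  from cases show False
  proof
    assume tp: "is_triv_plus G (ind_dim G P) (ind_triv_rep G P) a \<alpha>"
    obtain f i j where f: "f \<in> K" "i < ind_dim G P" "j < ind_dim G P" "f $ i \<noteq> f $ j" using nonconst by blast
    show False by (rule direct_case[OF tp irr K_sub ones_K f unit0_notK])
  next
    assume us: "uniserial_1A1 G (ind_dim G P) (ind_triv_rep G P) a \<alpha>"
    show False by (rule uniserial_false[OF us irr niso])
  qed
qed


end
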